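(* Let $\Omega\subset\mathbb R^3$ be a bounded domain with $C^2$ boundary $\Gamma$, and let $\mathbf u\in C^1(\overline\Omega)^3$ be divergence-free. Let $\kappa_1,\kappa_2$ be the principal curvatures of $\Gamma$ and $\mathcal A$ its shape operator. Then on $\Gamma$, $$(\mathbf u\cdot\nabla\mathbf u)\cdot\mathbf n=\mathbf u^{\boldsymbol\tau}\cdot\nabla_\Gamma u^{\mathbf n}-u^{\mathbf n}\operatorname{div}_\Gamma\mathbf u^{\boldsymbol\tau}-(\kappa_1+\kappa_2)(u^{\mathbf n})^2-\mathbf u^{\boldsymbol\tau}\cdot\mathcal A\mathbf u^{\boldsymbol\tau}$$ $$=2\,\mathbf u^{\boldsymbol\tau}\cdot\nabla_\Gamma u^{\mathbf n}-\operatorname{div}_\Gamma(u^{\mathbf n}\mathbf u^{\boldsymbol\tau})-(\kappa_1+\kappa_2)(u^{\mathbf n})^2-\mathbf u^{\boldsymbol\tau}\cdot\mathcal A\mathbf u^{\boldsymbol\tau}.$$ Consequently, if $\mathcal U\in C^1(\overline\Omega)^3$ is also divergence-free and $\mathbf u=\mathcal U$ on a union $\Gamma_+$ of boundary components, then $(\mathbf u\cdot\nabla\mathbf u)\cdot\mathbf n=(\mathcal U\cdot\nabla\mathcal U)\cdot\mathbf n$ on $\Gamma_+$.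
   Context: $\mathbf n$ is the outward unit normal on $\Gamma$. $u^{\mathbf n}=\mathbf u\cdot\mathbf n$ and $\mathbf u^{\boldsymbol\tau}=\mathbf u-u^{\mathbf n}\mathbf n$ on $\Gamma$, the latter regarded as a tangent field. The shape operator $\mathcal A$ maps a tangent vector $\mathbf v$ to the directional derivative of $\mathbf n$ in the direction $\mathbf v$ (a tangent vector); $\kappa_1,\kappa_2$ are its eigenvalues (so they are positive on a sphere with this outward-normal convention). $\nabla_\Gamma$ and $\operatorname{div}_\Gamma$ are the surface gradient and surface divergence on $\Gamma$. *)

theory Defs
  imports "HOL-Analysis.Analysis"
begin

type_synonym R3 = "real^3"

definition C1_on :: "'a::real_normed_vector set \<Rightarrow> ('a \<Rightarrow> 'b::real_normed_vector) \<Rightarrow> bool" where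
  "C1_on U f \<longleftrightarrow> (\<exists>f'. (\<forall>x\<in>U. (f has_derivative blinfun_apply (f' x)) (at x)) \<and> continuous_on U f')"

definition C2_boundary :: "R3 set \<Rightarrow> bool" where
  "C2_boundary \<Omega> \<longleftrightarrow>
     (\<forall>p\<in>frontier \<Omega>. \<exists>V (\<phi>::R3 \<Rightarrow> real) \<phi>'. open V \<and> p \<in> V \<and>
        (\<forall>x\<in>V. (\<phi> has_derivative blinfun_apply (\<phi>' x)) (at x)) \<and> C1_on V \<phi>' \<and>
        (\<forall>x\<in>V. \<phi>' x \<noteq> 0) \<and>
        \<Omega> \<inter> V = {x\<in>V. \<phi> x < 0} \<and> frontier \<Omega> \<inter> V = {x\<in>V. \<phi> x = 0})"

definition bounded_C2_domain :: "R3 set \<Rightarrow> bool" where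
  "bounded_C2_domain \<Omega> \<longleftrightarrow> open \<Omega> \<and> connected \<Omega> \<and> \<Omega> \<noteq> {} \<and> bounded \<Omega> \<and> C2_boundary \<Omega>"

text \<open>u in C^1(closure Omega)^3, with Du the (continuously extended) derivative.\<close>
definition C1_up_to_boundary :: "R3 set \<Rightarrow> (R3 \<Rightarrow> R3) \<Rightarrow> (R3 \<Rightarrow> (R3 \<Rightarrow>\<^sub>L R3)) \<Rightarrow> bool" where
  "C1_up_to_boundary \<Omega> u Du \<longleftrightarrow>
     continuous_on (closure \<Omega>) u \<and>
     (\<forall>x\<in>\<Omega>. (u has_derivative blinfun_apply (Du x)) (at x)) \<and>
     continuous_on (closure \<Omega>) Du"

definition divergence :: "(R3 \<Rightarrow>\<^sub>L R3) \<Rightarrow> real" where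
  "divergence D = (\<Sum>i\<in>UNIV. (blinfun_apply D (axis i 1)) $ i)"

definition surface_curve :: "R3 set \<Rightarrow> R3 \<Rightarrow> (real \<Rightarrow> R3) \<Rightarrow> R3 \<Rightarrow> bool" where
  "surface_curve S p \<gamma> v \<longleftrightarrow> range \<gamma> \<subseteq> S \<and> \<gamma> 0 = p \<and> (\<gamma> has_vector_derivative v) (at 0)"

definition tangent_space :: "R3 set \<Rightarrow> R3 \<Rightarrow> R3 set" where
  "tangent_space S p = {v. \<exists>\<gamma>. surface_curve S p \<gamma> v}"

definition surface_grad :: "R3 set \<Rightarrow> (R3 \<Rightarrow> real) \<Rightarrow> R3 \<Rightarrow> R3" where
  "surface_grad S f p = (THE g. g \<in> tangent_space S p \<and>
     (\<forall>\<gamma> v. surface_curve S p \<gamma> v \<longrightarrow> ((f \<circ> \<gamma>) has_real_derivative (g \<bullet> v)) (at 0)))"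

definition surface_div :: "R3 set \<Rightarrow> (R3 \<Rightarrow> R3) \<Rightarrow> R3 \<Rightarrow> real" where
  "surface_div S w p = (\<Sum>i\<in>UNIV. surface_grad S (\<lambda>x. w x $ i) p $ i)"

definition outward_normal :: "R3 set \<Rightarrow> R3 \<Rightarrow> R3" where
  "outward_normal \<Omega> p = (THE n. norm n = 1 \<and>
     (\<forall>v\<in>tangent_space (frontier \<Omega>) p. n \<bullet> v = 0) \<and>
     (\<exists>e>0. \<forall>t. 0 < t \<and> t < e \<longrightarrow> p + t *\<^sub>R n \<notin> closure \<Omega> \<and> p - t *\<^sub>R n \<in> \<Omega>))"

definition shape_operator :: "R3 set \<Rightarrow> R3 \<Rightarrow> R3 \<Rightarrow> R3" where
  "shape_operator \<Omega> p v = (THE w. \<forall>\<gamma>. surface_curve (frontier \<Omega>) p \<gamma> v \<longrightarrow>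
     ((outward_normal \<Omega> \<circ> \<gamma>) has_vector_derivative w) (at 0))"

text \<open>k1, k2 are the principal curvatures at p: eigenvalues of the shape operator on
  the tangent plane (with an orthonormal eigenbasis, the operator being self-adjoint).\<close>
definition principal_curvatures :: "R3 set \<Rightarrow> R3 \<Rightarrow> real \<Rightarrow> real \<Rightarrow> bool" where
  "principal_curvatures \<Omega> p k1 k2 \<longleftrightarrow>
     (\<exists>e1 e2. e1 \<in> tangent_space (frontier \<Omega>) p \<and> e2 \<in> tangent_space (frontier \<Omega>) p \<and>
        norm e1 = 1 \<and> norm e2 = 1 \<and> e1 \<bullet> e2 = 0 \<and>
        shape_operator \<Omega> p e1 = k1 *\<^sub>R e1 \<and> shape_operator \<Omega> p e2 = k2 *\<^sub>R e2)"

definition normal_comp :: "R3 set \<Rightarrow> (R3 \<Rightarrow> R3) \<Rightarrow> R3 \<Rightarrow> real" where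
  "normal_comp \<Omega> u x = u x \<bullet> outward_normal \<Omega> x"

definition tangential_part :: "R3 set \<Rightarrow> (R3 \<Rightarrow> R3) \<Rightarrow> R3 \<Rightarrow> R3" where
  "tangential_part \<Omega> u x = u x - normal_comp \<Omega> u x *\<^sub>R outward_normal \<Omega> x"

definition union_of_boundary_components :: "R3 set \<Rightarrow> R3 set \<Rightarrow> bool" where
  "union_of_boundary_components \<Omega> G \<longleftrightarrow>
     G \<subseteq> frontier \<Omega> \<and> (\<forall>x\<in>G. connected_component_set (frontier \<Omega>) x \<subseteq> G)"

end

theory Submission
  imports Defs
begin


lemma lin_grad:
  fixes L :: "real^3 \<Rightarrow> real" assumes "linear L"
  shows "L w = (\<chi> j. L (axis j 1)) \<bullet> w"
proof -
  have "L w = L (\<Sum>j\<in>UNIV. (w$j) *\<^sub>R axis j 1)" by (simp add: basis_expansion flip: scalar_mult_eq_scaleR)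
  also have "... = (\<Sum>j\<in>UNIV. w$j * L (axis j 1))"
    using assms by (simp add: linear_sum linear_scale o_def)
  also have "... = (\<chi> j. L (axis j 1)) \<bullet> w"
    by (simp add: inner_vec_def mult.commute)
  finally show ?thesis .
qed

lemma lin_vec_expand:
  fixes M :: "real^3 \<Rightarrow> real^3" assumes "linear M"
  shows "M w = (\<Sum>j\<in>UNIV. w$j *\<^sub>R M (axis j 1))"
proof -
  have "M w = M (\<Sum>j\<in>UNIV. (w$j) *\<^sub>R axis j 1)" by (simp add: basis_expansion flip: scalar_mult_eq_scaleR)
  also have "... = (\<Sum>j\<in>UNIV. w$j *\<^sub>R M (axis j 1))"
    using assms by (simp add: linear_sum linear_scale o_def)
  finally show ?thesis .
qed

definition tr3 :: "(real^3 \<Rightarrow> real^3) \<Rightarrow> real" where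
  "tr3 M = (\<Sum>i\<in>UNIV. M (axis i 1) $ i)"

lemma orthonormal_expand:
  fixes f1 f2 f3 x :: "real^3"
  assumes "norm f1 = 1" "norm f2 = 1" "norm f3 = 1" "f1 \<bullet> f2 = 0" "f1 \<bullet> f3 = 0" "f2 \<bullet> f3 = 0"
  shows "x = (x \<bullet> f1) *\<^sub>R f1 + (x \<bullet> f2) *\<^sub>R f2 + (x \<bullet> f3) *\<^sub>R f3"
proof (rule ccontr)
  assume ne: "x \<noteq> (x \<bullet> f1) *\<^sub>R f1 + (x \<bullet> f2) *\<^sub>R f2 + (x \<bullet> f3) *\<^sub>R f3"
  define y where "y = x - ((x \<bullet> f1) *\<^sub>R f1 + (x \<bullet> f2) *\<^sub>R f2 + (x \<bullet> f3) *\<^sub>R f3)"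
  have y0: "y \<noteq> 0" using ne unfolding y_def by simp
  have n1: "f1 \<bullet> f1 = 1" "f2 \<bullet> f2 = 1" "f3 \<bullet> f3 = 1" using assms by (simp_all add: norm_eq_1)
  have o: "y \<bullet> f1 = 0" "y \<bullet> f2 = 0" "y \<bullet> f3 = 0"
    using assms n1 unfolding y_def by (simp_all add: algebra_simps inner_commute)
  have d: "f1 \<noteq> f2" "f1 \<noteq> f3" "f2 \<noteq> f3" "y \<noteq> f1" "y \<noteq> f2" "y \<noteq> f3"
    using assms n1 o by auto
  have "pairwise orthogonal {f1,f2,f3,y}"
    using assms o by (auto simp: pairwise_def orthogonal_def inner_commute)
  moreover have "0 \<notin> {f1,f2,f3,y}" using assms y0 by auto
  ultimately have "independent {f1,f2,f3,y}" by (rule pairwise_orthogonal_independent)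
  hence "card {f1,f2,f3,y} \<le> DIM(real^3)" by (rule independent_bound[THEN conjunct2])
  moreover have "card {f1,f2,f3,y} = 4" using d by auto
  ultimately show False by simp
qed

lemma trace_orthonormal:
  fixes f1 f2 f3 :: "real^3" and M :: "real^3 \<Rightarrow> real^3"
  assumes "linear M" "norm f1 = 1" "norm f2 = 1" "norm f3 = 1" "f1 \<bullet> f2 = 0" "f1 \<bullet> f3 = 0" "f2 \<bullet> f3 = 0"
  shows "tr3 M = f1 \<bullet> M f1 + f2 \<bullet> M f2 + f3 \<bullet> M f3"
proof -
  have e: "M (axis i 1) = (f1 $ i) *\<^sub>R M f1 + (f2 $ i) *\<^sub>R M f2 + (f3 $ i) *\<^sub>R M f3" for i
  proof -
    have "axis i (1::real) = (axis i 1 \<bullet> f1) *\<^sub>R f1 + (axis i 1 \<bullet> f2) *\<^sub>R f2 + (axis i 1 \<bullet> f3) *\<^sub>R f3"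
      by (rule orthonormal_expand[OF assms(2-)])
    hence "M (axis i 1) = M ((axis i 1 \<bullet> f1) *\<^sub>R f1 + (axis i 1 \<bullet> f2) *\<^sub>R f2 + (axis i 1 \<bullet> f3) *\<^sub>R f3)" by simp
    also have "... = (f1 $ i) *\<^sub>R M f1 + (f2 $ i) *\<^sub>R M f2 + (f3 $ i) *\<^sub>R M f3"
      using assms(1) by (simp add: linear_add linear_scale inner_axis')
    finally show ?thesis .
  qed
  show ?thesis unfolding tr3_def e
    by (simp add: sum.distrib inner_vec_def mult.commute)
qed



locale chart =
  fixes \<Omega> :: "(real^3) set" and V :: "(real^3) set" and \<phi> :: "real^3 \<Rightarrow> real"
    and \<phi>' :: "real^3 \<Rightarrow> ((real^3) \<Rightarrow>\<^sub>L real)"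
  assumes openV: "open V"
    and deriv: "\<And>x. x\<in>V \<Longrightarrow> (\<phi> has_derivative blinfun_apply (\<phi>' x)) (at x)"
    and cont': "continuous_on V \<phi>'"
    and deriv2: "\<And>x. x\<in>V \<Longrightarrow> \<phi>' differentiable (at x)"
    and nz: "\<And>x. x\<in>V \<Longrightarrow> \<phi>' x \<noteq> 0"
    and inO: "\<Omega> \<inter> V = {x\<in>V. \<phi> x < 0}"
    and fr: "frontier \<Omega> \<inter> V = {x\<in>V. \<phi> x = 0}"
begin

definition N :: "real^3 \<Rightarrow> real^3" where "N x = (\<chi> j. \<phi>' x (axis j 1))"

lemma phi'_N: "\<phi>' x v = N x \<bullet> v"
  unfolding N_def by (rule lin_grad) (rule bounded_linear.linear[OF blinfun.bounded_linear_right])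

lemma N_nz: "x \<in> V \<Longrightarrow> N x \<noteq> 0"
proof
  assume "x \<in> V" "N x = 0"
  hence "\<phi>' x = 0" by (intro blinfun_eqI) (simp add: phi'_N)
  with nz \<open>x\<in>V\<close> show False by blast
qed

lemma LIN:
  assumes x: "x \<in> V" and eta: "\<eta> > 0"
  shows "\<exists>\<delta>>0. ball x \<delta> \<subseteq> V \<and> (\<forall>a\<in>ball x \<delta>. \<forall>b\<in>ball x \<delta>.
           \<bar>\<phi> b - \<phi> a - \<phi>' x (b - a)\<bar> \<le> \<eta> * norm (b - a))"
proof -
  obtain d1 where d1: "d1 > 0" "\<And>y. y\<in>V \<Longrightarrow> dist y x < d1 \<Longrightarrow> dist (\<phi>' y) (\<phi>' x) < \<eta>"
    using cont' x eta unfolding continuous_on_iff by metis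
  obtain d2 where d2: "d2 > 0" "ball x d2 \<subseteq> V" using openV x open_contains_ball by blast
  define \<delta> where "\<delta> = min d1 d2"
  have sub: "ball x \<delta> \<subseteq> V" using d2 unfolding \<delta>_def by auto
  have est: "\<bar>\<phi> b - \<phi> a - \<phi>' x (b - a)\<bar> \<le> \<eta> * norm (b - a)" if a: "a \<in> ball x \<delta>" and b: "b \<in> ball x \<delta>" for a b
  proof -
    have "norm (\<phi> b - \<phi> a - \<phi>' x (b - a)) \<le> norm (b - a) * \<eta>"
    proof (rule differentiable_bound_linearization[where S="ball x \<delta>" and f'="\<lambda>y. blinfun_apply (\<phi>' y)"])
      show "a + t *\<^sub>R (b - a) \<in> ball x \<delta>" if "t \<in> {0..1}" for t
      proof -
        have "a + t *\<^sub>R (b - a) = (1 - t) *\<^sub>R a + t *\<^sub>R b" by (simp add: algebra_simps)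
        thus ?thesis using convex_ball[of x \<delta>] a b that unfolding convex_alt by auto
      qed
    next
      show "(\<phi> has_derivative blinfun_apply (\<phi>' y)) (at y within ball x \<delta>)" if "y \<in> ball x \<delta>" for y
        using deriv sub that by (blast intro: has_derivative_at_withinI)
    next
      show "onorm (blinfun_apply (\<phi>' y) - blinfun_apply (\<phi>' x)) \<le> \<eta>" if "y \<in> ball x \<delta>" for y
      proof -
        have e1: "onorm (blinfun_apply (\<phi>' y) - blinfun_apply (\<phi>' x)) = norm (\<phi>' y - \<phi>' x)"
          by (simp add: norm_blinfun.rep_eq minus_blinfun.rep_eq fun_diff_def)
        have yV: "y \<in> V" using that sub by auto
        have "dist y x < d1" using that unfolding \<delta>_def by (simp add: dist_commute)
        hence "norm (\<phi>' y - \<phi>' x) < \<eta>" using d1(2)[OF yV] by (simp add: dist_norm)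
        thus ?thesis using e1 by simp
      qed
    next
      show "x \<in> ball x \<delta>" using d1 d2 unfolding \<delta>_def by auto
    qed
    thus ?thesis by (simp add: mult.commute)
  qed
  show ?thesis using sub est d1 d2 unfolding \<delta>_def by (intro exI[of _ "min d1 d2"]) auto
qed


lemma phi_cont: "continuous_on V \<phi>"
  using deriv by (meson continuous_at_imp_continuous_on has_derivative_continuous)

lemma CURVE:
  assumes x: "x \<in> frontier \<Omega>" "x \<in> V" and v: "N x \<bullet> v = 0"
  shows "\<exists>\<gamma>. surface_curve (frontier \<Omega>) x \<gamma> v \<and> range \<gamma> \<subseteq> connected_component_set (frontier \<Omega>) x"
proof -
  define n where "n = N x"
  define c where "c = n \<bullet> n"
  define nn where "nn = norm n"
  define mv where "mv = norm v + 1"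
  have n0: "n \<noteq> 0" using N_nz x n_def by simp
  have nnpos: "nn > 0" using n0 nn_def by simp
  have cnn: "c = nn * nn" unfolding c_def nn_def by (simp add: dot_square_norm power2_eq_square)
  have cpos: "c > 0" using cnn nnpos by simp
  have mvpos: "mv > 0" "norm v \<le> mv" unfolding mv_def using norm_ge_zero[of v] by linarith+
  have phix: "\<phi> x = 0" using x fr by auto
  have nv: "n \<bullet> v = 0" using v n_def by simp
  define \<eta>0 where "\<eta>0 = c / (2*nn)"
  have \<eta>0: "\<eta>0 > 0" "\<eta>0 * nn = c/2" unfolding \<eta>0_def using cpos nnpos by auto
  obtain \<delta>0 where \<delta>0: "\<delta>0 > 0" "ball x \<delta>0 \<subseteq> V"
    "\<forall>a\<in>ball x \<delta>0. \<forall>b\<in>ball x \<delta>0. \<bar>\<phi> b - \<phi> a - \<phi>' x (b-a)\<bar> \<le> \<eta>0 * norm(b-a)"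
    using LIN[OF x(2) \<eta>0(1)] by blast
  define \<sigma>0 where "\<sigma>0 = \<delta>0/(4*nn)"
  have \<sigma>0: "\<sigma>0 > 0" "\<sigma>0 * nn = \<delta>0/4" unfolding \<sigma>0_def using \<delta>0 nnpos by auto
  define \<tau>0 where "\<tau>0 = min (\<delta>0/(2*mv)) (\<sigma>0*c/(4*\<eta>0*mv))"
  have \<tau>0: "\<tau>0 > 0" "\<tau>0 * mv \<le> \<delta>0/2" "\<eta>0 * (\<tau>0 * mv) \<le> \<sigma>0*c/4"
  proof -
    show "\<tau>0 > 0" unfolding \<tau>0_def using \<delta>0 mvpos \<sigma>0 cpos \<eta>0 by auto
    have "\<tau>0 \<le> \<delta>0/(2*mv)" unfolding \<tau>0_def by simp
    thus "\<tau>0 * mv \<le> \<delta>0/2" using mvpos by (simp add: field_simps)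
    have "\<tau>0 \<le> \<sigma>0*c/(4*\<eta>0*mv)" unfolding \<tau>0_def by simp
    thus "\<eta>0 * (\<tau>0 * mv) \<le> \<sigma>0*c/4" using mvpos \<eta>0 by (simp add: field_simps)
  qed
  define P where "P t s = x + t *\<^sub>R v + s *\<^sub>R n" for t s :: real
  have P00: "P 0 0 = x" unfolding P_def by simp
  have Pnorm: "norm (P t s - P t' s') \<le> \<bar>t - t'\<bar> * norm v + \<bar>s - s'\<bar> * nn" for t s t' s'
  proof -
    have "P t s - P t' s' = (t - t') *\<^sub>R v + (s - s') *\<^sub>R n" unfolding P_def by (simp add: algebra_simps)
    thus ?thesis using norm_triangle_ineq[of "(t - t') *\<^sub>R v" "(s - s') *\<^sub>R n"] nn_def by simp
  qed
  have Plin: "\<phi>' x (P t s - P t' s') = (s - s') * c" for t s t' s'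
  proof -
    have "P t s - P t' s' = (t - t') *\<^sub>R v + (s - s') *\<^sub>R n" unfolding P_def by (simp add: algebra_simps)
    thus ?thesis unfolding phi'_N n_def[symmetric] c_def using nv by (simp add: inner_add_right)
  qed
  have Pball: "P t s \<in> ball x \<delta>0" if "\<bar>t\<bar> < \<tau>0" "\<bar>s\<bar> \<le> \<sigma>0" for t s
  proof -
    have "norm (P t s - P 0 0) \<le> \<bar>t\<bar> * norm v + \<bar>s\<bar> * nn" using Pnorm[of t s 0 0] by simp
    also have "\<dots> \<le> \<bar>t\<bar> * mv + \<sigma>0 * nn"
    proof (rule add_mono)
      show "\<bar>t\<bar> * norm v \<le> \<bar>t\<bar> * mv" using mvpos(2) by (simp add: mult_left_mono)
      show "\<bar>s\<bar> * nn \<le> \<sigma>0 * nn" using that(2) nnpos by (simp add: mult_right_mono)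
    qed
    also have "\<dots> < \<delta>0/2 + \<delta>0/4"
    proof -
      have "\<bar>t\<bar> * mv < \<tau>0 * mv" using that mvpos by simp
      thus ?thesis using \<tau>0 \<sigma>0 by linarith
    qed
    finally show ?thesis using \<delta>0 P00 by (simp add: dist_norm norm_minus_commute)
  qed
  have key: "\<bar>s - s'\<bar> * c \<le> 2 * \<eta> * \<bar>t - t'\<bar> * norm v"
    if "\<phi> (P t s) = 0" "\<phi> (P t' s') = 0" "P t s \<in> ball x \<delta>" "P t' s' \<in> ball x \<delta>"
       "\<forall>a\<in>ball x \<delta>. \<forall>b\<in>ball x \<delta>. \<bar>\<phi> b - \<phi> a - \<phi>' x (b-a)\<bar> \<le> \<eta> * norm(b-a)"
       "\<eta> \<le> \<eta>0" "\<eta> > 0" for s s' t t' \<eta> \<delta>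
  proof -
    have "\<bar>(s - s') * c\<bar> \<le> \<eta> * norm (P t s - P t' s')"
      using that(5) that(3,4) that(1,2) Plin[of t s t' s'] by force
    also have "\<dots> \<le> \<eta> * (\<bar>t - t'\<bar> * norm v + \<bar>s - s'\<bar> * nn)"
      using Pnorm that(7) by (simp add: mult_left_mono)
    also have "\<dots> \<le> \<eta> * (\<bar>t - t'\<bar> * norm v) + \<bar>s - s'\<bar> * (c/2)"
    proof -
      have "\<eta> * nn \<le> \<eta>0 * nn" using that(6) nnpos by simp
      hence "\<eta> * (\<bar>s - s'\<bar> * nn) \<le> \<bar>s - s'\<bar> * (c/2)" using \<eta>0
        by (metis abs_ge_zero mult.left_commute mult_left_mono)
      thus ?thesis by (simp add: distrib_left)
    qed
    finally show ?thesis using cpos by (simp add: abs_mult)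
  qed
  have ex: "\<exists>s. \<bar>s\<bar> \<le> \<sigma>0 \<and> \<phi> (P t s) = 0" if t: "\<bar>t\<bar> < \<tau>0" for t
  proof -
    have tv: "\<eta>0 * (\<bar>t\<bar> * norm v) < \<sigma>0 * c / 2"
    proof -
      have "\<bar>t\<bar> * norm v \<le> \<tau>0 * mv" using t mvpos by (intro mult_mono) simp_all
      hence "\<eta>0 * (\<bar>t\<bar> * norm v) \<le> \<eta>0 * (\<tau>0 * mv)" using \<eta>0 by simp
      moreover have "\<sigma>0 * c > 0" using \<sigma>0 cpos by simp
      ultimately show ?thesis using \<tau>0(3) by linarith
    qed
    have b1: "P t \<sigma>0 \<in> ball x \<delta>0" "P t (-\<sigma>0) \<in> ball x \<delta>0" "P 0 0 \<in> ball x \<delta>0"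
      using Pball t \<sigma>0 \<tau>0 by auto
    have half: "\<sigma>0 * (\<eta>0 * nn) = \<sigma>0 * c / 2" using \<eta>0(2) by simp
    have hi: "\<phi> (P t \<sigma>0) \<ge> 0"
    proof -
      have e1: "\<bar>\<phi> (P t \<sigma>0) - \<sigma>0 * c\<bar> \<le> \<eta>0 * norm (P t \<sigma>0 - P 0 0)"
      proof -
        have "\<bar>\<phi> (P t \<sigma>0) - \<phi> (P 0 0) - \<phi>' x (P t \<sigma>0 - P 0 0)\<bar> \<le> \<eta>0 * norm (P t \<sigma>0 - P 0 0)"
          using \<delta>0(3) b1 by blast
        thus ?thesis unfolding Plin by (simp add: P00 phix)
      qed
      have "norm (P t \<sigma>0 - P 0 0) \<le> \<bar>t\<bar> * norm v + \<sigma>0 * nn" using Pnorm[of t \<sigma>0 0 0] \<sigma>0 by simp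
      hence "\<eta>0 * norm (P t \<sigma>0 - P 0 0) \<le> \<eta>0 * (\<bar>t\<bar> * norm v + \<sigma>0 * nn)" using \<eta>0 by (simp add: mult_left_mono)
      also have "\<dots> = \<eta>0 * (\<bar>t\<bar> * norm v) + \<sigma>0 * (\<eta>0 * nn)" by (simp add: algebra_simps)
      finally show ?thesis using e1 tv half by linarith
    qed
    have lo: "\<phi> (P t (-\<sigma>0)) \<le> 0"
    proof -
      have e1: "\<bar>\<phi> (P t (-\<sigma>0)) + \<sigma>0 * c\<bar> \<le> \<eta>0 * norm (P t (-\<sigma>0) - P 0 0)"
      proof -
        have "\<bar>\<phi> (P t (-\<sigma>0)) - \<phi> (P 0 0) - \<phi>' x (P t (-\<sigma>0) - P 0 0)\<bar> \<le> \<eta>0 * norm (P t (-\<sigma>0) - P 0 0)"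
          using \<delta>0(3) b1 by blast
        thus ?thesis unfolding Plin by (simp add: P00 phix)
      qed
      have "norm (P t (-\<sigma>0) - P 0 0) \<le> \<bar>t\<bar> * norm v + \<sigma>0 * nn" using Pnorm[of t "-\<sigma>0" 0 0] \<sigma>0 by simp
      hence "\<eta>0 * norm (P t (-\<sigma>0) - P 0 0) \<le> \<eta>0 * (\<bar>t\<bar> * norm v + \<sigma>0 * nn)" using \<eta>0 by (simp add: mult_left_mono)
      also have "\<dots> = \<eta>0 * (\<bar>t\<bar> * norm v) + \<sigma>0 * (\<eta>0 * nn)" by (simp add: algebra_simps)
      finally show ?thesis using e1 tv half by linarith
    qed
    have cont: "continuous_on {-\<sigma>0..\<sigma>0} (\<lambda>s. \<phi> (P t s))"
    proof (rule continuous_on_compose2[OF phi_cont])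
      show "continuous_on {-\<sigma>0..\<sigma>0} (P t)" unfolding P_def by (intro continuous_intros)
      show "P t ` {-\<sigma>0..\<sigma>0} \<subseteq> V" using Pball[OF t] \<delta>0(2) by (force simp: abs_le_iff)
    qed
    obtain s where "-\<sigma>0 \<le> s" "s \<le> \<sigma>0" "\<phi> (P t s) = 0"
      using IVT'[of "\<lambda>s. \<phi> (P t s)" "-\<sigma>0" 0 \<sigma>0, OF lo hi _ cont] \<sigma>0 by auto
    thus ?thesis by (intro exI[of _ s]) auto
  qed
  define sf where "sf t = (SOME s. \<bar>s\<bar> \<le> \<sigma>0 \<and> \<phi> (P t s) = 0)" for t
  have sf: "\<bar>sf t\<bar> \<le> \<sigma>0" "\<phi> (P t (sf t)) = 0" if "\<bar>t\<bar> < \<tau>0" for t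
    using someI_ex[OF ex[OF that]] unfolding sf_def by auto
  have lip: "\<bar>sf t - sf t'\<bar> * c \<le> 2 * \<eta>0 * \<bar>t - t'\<bar> * norm v" if "\<bar>t\<bar> < \<tau>0" "\<bar>t'\<bar> < \<tau>0" for t t'
    using key[OF sf(2)[OF that(1)] sf(2)[OF that(2)] Pball[OF that(1) sf(1)[OF that(1)]]
        Pball[OF that(2) sf(1)[OF that(2)]] \<delta>0(3) order_refl \<eta>0(1)] .
  have sf0: "sf 0 = 0"
  proof -
    have "\<bar>sf 0\<bar> * c \<le> 0"
      using lip[of 0 0] \<tau>0 key[of 0 0 0 0 \<delta>0 \<eta>0] sf[of 0] phix P00 \<delta>0 \<eta>0 Pball[of 0 0] \<sigma>0
      using key[OF sf(2)[of 0] _ Pball[of 0 "sf 0"] _ \<delta>0(3) order_refl \<eta>0(1), of 0 0] cpos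
      by simp
    thus ?thesis using cpos by (simp add: mult_le_0_iff)
  qed
  have eta0nn: "2 * \<eta>0 = nn" using \<eta>0(2) cnn nnpos by (simp add: field_simps)
  have small: "\<exists>d>0. \<forall>t. \<bar>t\<bar> < d \<longrightarrow> \<bar>sf t\<bar> * c \<le> 2*\<eta>*\<bar>t\<bar>*norm v" if eta: "\<eta> > 0" "\<eta> \<le> \<eta>0" for \<eta>
  proof -
    obtain \<delta> where \<delta>: "\<delta>>0" "ball x \<delta> \<subseteq> V"
      "\<forall>a\<in>ball x \<delta>. \<forall>b\<in>ball x \<delta>. \<bar>\<phi> b - \<phi> a - \<phi>' x (b-a)\<bar> \<le> \<eta>*norm(b-a)"
      using LIN[OF x(2) eta(1)] by blast
    define d where "d = min \<tau>0 (\<delta>/(2*mv))"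
    show ?thesis
    proof (intro exI[of _ d] conjI allI impI)
      show "d > 0" unfolding d_def using \<tau>0 \<delta> mvpos by simp
      fix t assume t: "\<bar>t\<bar> < d"
      have t0: "\<bar>t\<bar> < \<tau>0" using t unfolding d_def by simp
      have td: "\<bar>t\<bar> * mv < \<delta>/2" using t mvpos unfolding d_def by (simp add: field_simps)
      have "(\<bar>sf t\<bar> * nn) * nn = \<bar>sf t\<bar> * c" using cnn by (simp add: algebra_simps)
      also have "\<dots> \<le> 2*\<eta>0*\<bar>t\<bar>*norm v" using lip[OF t0, of 0] sf0 \<tau>0 by simp
      also have "\<dots> = (\<bar>t\<bar> * norm v) * nn" using eta0nn by (simp add: algebra_simps)
      finally have "(\<bar>sf t\<bar> * nn) * nn \<le> (\<bar>t\<bar> * norm v) * nn" .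
      hence sn: "\<bar>sf t\<bar> * nn \<le> \<bar>t\<bar> * norm v" using nnpos by simp
      have "norm (P t (sf t) - P 0 0) \<le> \<bar>t\<bar> * norm v + \<bar>sf t\<bar> * nn" using Pnorm[of t "sf t" 0 0] by simp
      also have "\<dots> \<le> 2 * (\<bar>t\<bar> * mv)" using sn mvpos(2) by (smt (verit) abs_ge_zero mult_left_mono)
      also have "\<dots> < \<delta>" using td by simp
      finally have inb: "P t (sf t) \<in> ball x \<delta>" using P00 by (simp add: dist_norm norm_minus_commute)
      have "\<phi> (P 0 0) = 0" using P00 phix by simp
      from key[OF sf(2)[OF t0] this inb _ \<delta>(3) eta(2) eta(1)] P00 \<delta>(1)
      show "\<bar>sf t\<bar> * c \<le> 2*\<eta>*\<bar>t\<bar>*norm v" by simp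
    qed
  qed
  define \<gamma> where "\<gamma> t = (if \<bar>t\<bar> < \<tau>0 then P t (sf t) else x)" for t
  have g0: "\<gamma> 0 = x" unfolding \<gamma>_def using \<tau>0 sf0 P00 by simp
  have der: "(\<gamma> has_vector_derivative v) (at 0)"
    unfolding has_vector_derivative_def has_derivative_at_alt
  proof (intro conjI allI impI)
    show "bounded_linear (\<lambda>h. h *\<^sub>R v)" by (rule bounded_linear_scaleR_left)
    fix e :: real assume e: "e > 0"
    define \<eta> where "\<eta> = min \<eta>0 (e * nn / (2 * mv))"
    have eta: "\<eta> > 0" "\<eta> \<le> \<eta>0" "\<eta> * (2 * mv) \<le> e * nn"
      unfolding \<eta>_def using \<eta>0 e nnpos mvpos by (auto simp: field_simps min_def)
    obtain d where d: "d > 0" "\<And>t. \<bar>t\<bar> < d \<Longrightarrow> \<bar>sf t\<bar> * c \<le> 2*\<eta>*\<bar>t\<bar>*norm v"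
      using small[OF eta(1,2)] by blast
    show "\<exists>d>0. \<forall>y. norm (y - 0) < d \<longrightarrow> norm (\<gamma> y - \<gamma> 0 - (y - 0) *\<^sub>R v) \<le> e * norm (y - 0)"
    proof (intro exI[of _ "min d \<tau>0"] conjI allI impI)
      show "min d \<tau>0 > 0" using d \<tau>0 by simp
      fix y :: real assume y: "norm (y - 0) < min d \<tau>0"
      have gy: "\<gamma> y = P y (sf y)" unfolding \<gamma>_def using y by simp
      have "\<gamma> y - \<gamma> 0 - (y - 0) *\<^sub>R v = sf y *\<^sub>R n" unfolding gy g0 P_def by simp
      hence nrm: "norm (\<gamma> y - \<gamma> 0 - (y - 0) *\<^sub>R v) = \<bar>sf y\<bar> * nn" using nn_def by simp
      have "(\<bar>sf y\<bar> * nn) * nn \<le> 2*\<eta>*\<bar>y\<bar>*norm v" using d(2)[of y] y cnn by (simp add: algebra_simps)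
      also have "\<dots> \<le> 2*\<eta>*\<bar>y\<bar>*mv" using mvpos eta by (simp add: mult_left_mono)
      also have "\<dots> = (\<eta> * (2 * mv)) * \<bar>y\<bar>" by simp
      also have "\<dots> \<le> (e * nn) * \<bar>y\<bar>" using eta(3) by (simp add: mult_right_mono)
      finally have "(\<bar>sf y\<bar> * nn) * nn \<le> (e * \<bar>y\<bar>) * nn" by (simp add: algebra_simps)
      hence "\<bar>sf y\<bar> * nn \<le> e * \<bar>y\<bar>" using nnpos by simp
      thus "norm (\<gamma> y - \<gamma> 0 - (y - 0) *\<^sub>R v) \<le> e * norm (y - 0)" using nrm by simp
    qed
  qed
  have inF: "\<gamma> t \<in> frontier \<Omega>" for t
  proof (cases "\<bar>t\<bar> < \<tau>0")
    case True
    hence "\<gamma> t \<in> V" "\<phi> (\<gamma> t) = 0" unfolding \<gamma>_def using Pball[OF True sf(1)[OF True]] sf(2)[OF True] \<delta>0(2) by auto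
    thus ?thesis using fr by auto
  next
    case False thus ?thesis unfolding \<gamma>_def using x by simp
  qed
  have contsf: "continuous_on {-\<tau>0<..<\<tau>0} sf"
  proof (rule lipschitz_on_continuous_on)
    show "lipschitz_on (2*\<eta>0*norm v / c) {-\<tau>0<..<\<tau>0} sf"
      unfolding lipschitz_on_def
    proof (intro conjI ballI)
      show "0 \<le> 2*\<eta>0*norm v / c" using \<eta>0 cpos by simp
      fix t t' assume "t \<in> {-\<tau>0<..<\<tau>0}" "t' \<in> {-\<tau>0<..<\<tau>0}"
      hence "\<bar>t\<bar> < \<tau>0" "\<bar>t'\<bar> < \<tau>0" by auto
      from lip[OF this] cpos show "dist (sf t) (sf t') \<le> 2*\<eta>0*norm v / c * dist t t'"
        by (simp add: dist_real_def field_simps)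
    qed
  qed
  have contg: "continuous_on {-\<tau>0<..<\<tau>0} \<gamma>"
  proof -
    have "continuous_on {-\<tau>0<..<\<tau>0} (\<lambda>t. P t (sf t))" unfolding P_def
      by (intro continuous_intros contsf)
    thus ?thesis by (rule continuous_on_cong[THEN iffD1, rotated 2]) (auto simp: \<gamma>_def)
  qed
  have conn: "\<gamma> ` {-\<tau>0<..<\<tau>0} \<subseteq> connected_component_set (frontier \<Omega>) x"
  proof (rule connected_component_maximal)
    show "x \<in> \<gamma> ` {-\<tau>0<..<\<tau>0}" using g0 \<tau>0 by force
    show "connected (\<gamma> ` {-\<tau>0<..<\<tau>0})" by (rule connected_continuous_image[OF contg]) simp
    show "\<gamma> ` {-\<tau>0<..<\<tau>0} \<subseteq> frontier \<Omega>" using inF by auto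
  qed
  have "range \<gamma> \<subseteq> connected_component_set (frontier \<Omega>) x"
  proof
    fix y assume "y \<in> range \<gamma>"
    then obtain t where t: "y = \<gamma> t" by auto
    show "y \<in> connected_component_set (frontier \<Omega>) x"
    proof (cases "\<bar>t\<bar> < \<tau>0")
      case True
      hence "t \<in> {-\<tau>0<..<\<tau>0}" by (auto simp: abs_less_iff)
      hence "\<gamma> t \<in> \<gamma> ` {-\<tau>0<..<\<tau>0}" by blast
      from subsetD[OF conn this] show ?thesis using t by simp
    next
      case False thus ?thesis using t x by (simp add: \<gamma>_def)
    qed
  qed
  moreover have "range \<gamma> \<subseteq> frontier \<Omega>" using inF by auto
  ultimately show ?thesis using der g0 unfolding surface_curve_def by (intro exI[of _ \<gamma>]) simp
qed


lemma curve_local: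
  fixes \<gamma> :: "real \<Rightarrow> real^3"
  assumes "(\<gamma> has_vector_derivative v) (at 0)" "open W" "\<gamma> 0 \<in> W"
  shows "\<exists>d>0. \<forall>t. \<bar>t\<bar> < d \<longrightarrow> \<gamma> t \<in> W"
proof -
  have "(\<gamma> \<longlongrightarrow> \<gamma> 0) (at 0)"
    using has_vector_derivative_continuous[OF assms(1)] by (simp add: continuous_at)
  hence "eventually (\<lambda>t. \<gamma> t \<in> W) (at 0)" using assms(2,3) by (rule topological_tendstoD)
  then obtain d where d: "d > 0" "\<And>t. t \<noteq> 0 \<Longrightarrow> dist t 0 < d \<Longrightarrow> \<gamma> t \<in> W"
    unfolding eventually_at by blast
  show ?thesis
  proof (intro exI[of _ d] conjI allI impI)
    fix t :: real assume "\<bar>t\<bar> < d"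
    thus "\<gamma> t \<in> W" by (cases "t = 0") (use d assms(3) in \<open>auto simp: dist_real_def\<close>)
  qed (use d in auto)
qed

lemma TS:
  assumes x: "x \<in> frontier \<Omega>" "x \<in> V"
  shows "tangent_space (frontier \<Omega>) x = {v. N x \<bullet> v = 0}"
proof
  show "{v. N x \<bullet> v = 0} \<subseteq> tangent_space (frontier \<Omega>) x"
    using CURVE[OF x] unfolding tangent_space_def by blast
  show "tangent_space (frontier \<Omega>) x \<subseteq> {v. N x \<bullet> v = 0}"
  proof
    fix v assume "v \<in> tangent_space (frontier \<Omega>) x"
    then obtain \<gamma> where g: "range \<gamma> \<subseteq> frontier \<Omega>" "\<gamma> 0 = x" "(\<gamma> has_vector_derivative v) (at 0)"
      unfolding tangent_space_def surface_curve_def by blast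
    have d1: "((\<phi> \<circ> \<gamma>) has_derivative (\<phi>' x \<circ> (\<lambda>h. h *\<^sub>R v))) (at 0)"
      using diff_chain_at[OF g(3)[unfolded has_vector_derivative_def]] deriv[OF x(2)] g(2) by simp
    obtain d where d: "d > 0" "\<And>t. \<bar>t\<bar> < d \<Longrightarrow> \<gamma> t \<in> V"
      using curve_local[OF g(3) openV] g(2) x by auto
    have d2: "((\<phi> \<circ> \<gamma>) has_derivative (\<lambda>h. 0)) (at 0)"
    proof (rule has_derivative_transform_within[OF has_derivative_const[of 0] d(1)])
      fix t :: real assume "t \<in> UNIV" "dist t 0 < d"
      hence "\<gamma> t \<in> V" using d(2) by (simp add: dist_real_def)
      moreover have "\<gamma> t \<in> frontier \<Omega>" using g(1) by auto
      ultimately show "0 = (\<phi> \<circ> \<gamma>) t" using fr by auto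
    qed simp
    have "(\<phi>' x \<circ> (\<lambda>h. h *\<^sub>R v)) = (\<lambda>h. 0)" using has_derivative_unique[OF d1 d2] .
    hence "\<phi>' x v = 0" by (metis comp_apply scaleR_one)
    thus "v \<in> {v. N x \<bullet> v = 0}" by (simp add: phi'_N)
  qed
qed

definition nu :: "real^3 \<Rightarrow> real^3" where "nu x = (1 / norm (N x)) *\<^sub>R N x"

lemma ON:
  assumes oO: "open \<Omega>" and x: "x \<in> frontier \<Omega>" "x \<in> V"
  shows "outward_normal \<Omega> x = nu x"
proof -
  define n where "n = N x"
  define u where "u = nu x"
  have n0: "n \<noteq> 0" using N_nz x n_def by simp
  have un: "u = (1 / norm n) *\<^sub>R n" unfolding u_def nu_def n_def ..
  have u1: "norm u = 1" using n0 un by simp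
  have uu: "u \<bullet> u = 1" using u1 by (simp add: norm_eq_1)
  have nu_: "n \<bullet> u = norm n" using n0 un by (simp add: dot_square_norm power2_eq_square)
  have TSx: "tangent_space (frontier \<Omega>) x = {v. n \<bullet> v = 0}" using TS[OF x] n_def by simp
  have phix: "\<phi> x = 0" using x fr by auto
  have clos: "closure \<Omega> = \<Omega> \<union> frontier \<Omega>" by (rule closure_Un_frontier)
  have hn: "norm n / 2 > 0" using n0 by simp
  obtain \<delta> where \<delta>: "\<delta>>0" "ball x \<delta> \<subseteq> V"
      "\<forall>a\<in>ball x \<delta>. \<forall>b\<in>ball x \<delta>. \<bar>\<phi> b - \<phi> a - \<phi>' x (b-a)\<bar> \<le> (norm n / 2)*norm(b-a)"
      using LIN[OF x(2) hn] by blast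
  have side: "x + t *\<^sub>R u \<notin> closure \<Omega> \<and> x - t *\<^sub>R u \<in> \<Omega>" if t: "0 < t" "t < \<delta>" for t
  proof -
    have inb: "x + t *\<^sub>R u \<in> ball x \<delta>" "x - t *\<^sub>R u \<in> ball x \<delta>" "x \<in> ball x \<delta>"
      using t u1 \<delta> by (auto simp: dist_norm)
    have l1: "\<phi>' x (t *\<^sub>R u) = t * norm n" using nu_ by (simp add: phi'_N n_def)
    have "\<bar>\<phi> (x + t *\<^sub>R u) - \<phi> x - \<phi>' x ((x + t *\<^sub>R u) - x)\<bar> \<le> (norm n / 2) * norm ((x + t *\<^sub>R u) - x)"
      using \<delta>(3) inb by blast
    hence "\<bar>\<phi> (x + t *\<^sub>R u) - t * norm n\<bar> \<le> (norm n / 2) * t" using l1 phix u1 t by simp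
    moreover have "(norm n / 2) * t = (t * norm n) / 2" by simp
    moreover have "t * norm n > 0" using t n0 by simp
    ultimately have p1: "\<phi> (x + t *\<^sub>R u) > 0" unfolding abs_le_iff by linarith
    have "\<bar>\<phi> (x - t *\<^sub>R u) - \<phi> x - \<phi>' x ((x - t *\<^sub>R u) - x)\<bar> \<le> (norm n / 2) * norm ((x - t *\<^sub>R u) - x)"
      using \<delta>(3) inb by blast
    moreover have "\<phi>' x ((x - t *\<^sub>R u) - x) = - (t * norm n)" using l1 by (simp add: blinfun.minus_right)
    ultimately have "\<bar>\<phi> (x - t *\<^sub>R u) + t * norm n\<bar> \<le> (norm n / 2) * t" using phix u1 t by simp
    moreover have "(norm n / 2) * t = (t * norm n) / 2" by simp
    moreover have "t * norm n > 0" using t n0 by simp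
    ultimately have p2: "\<phi> (x - t *\<^sub>R u) < 0" unfolding abs_le_iff by linarith
    have xV: "x + t *\<^sub>R u \<in> V" using inb \<delta>(2) by blast
    have "x + t *\<^sub>R u \<notin> \<Omega> \<inter> V" "x + t *\<^sub>R u \<notin> frontier \<Omega> \<inter> V" unfolding inO fr using p1 by auto
    hence "x + t *\<^sub>R u \<notin> \<Omega>" "x + t *\<^sub>R u \<notin> frontier \<Omega>" using xV by auto
    moreover have "x - t *\<^sub>R u \<in> \<Omega>"
    proof -
      have "x - t *\<^sub>R u \<in> V" using inb \<delta>(2) by blast
      hence "x - t *\<^sub>R u \<in> \<Omega> \<inter> V" unfolding inO using p2 by blast
      thus ?thesis by blast
    qed
    ultimately show ?thesis using clos by auto
  qed
  show ?thesis unfolding outward_normal_def u_def[symmetric]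
  proof (rule the_equality)
    show "norm u = 1 \<and> (\<forall>v\<in>tangent_space (frontier \<Omega>) x. u \<bullet> v = 0) \<and>
      (\<exists>e>0. \<forall>t. 0 < t \<and> t < e \<longrightarrow> x + t *\<^sub>R u \<notin> closure \<Omega> \<and> x - t *\<^sub>R u \<in> \<Omega>)"
      using u1 side \<delta>(1) TSx un by (auto simp: inner_commute)
  next
    fix m assume m: "norm m = 1 \<and> (\<forall>v\<in>tangent_space (frontier \<Omega>) x. m \<bullet> v = 0) \<and>
      (\<exists>e>0. \<forall>t. 0 < t \<and> t < e \<longrightarrow> x + t *\<^sub>R m \<notin> closure \<Omega> \<and> x - t *\<^sub>R m \<in> \<Omega>)"
    define a where "a = m \<bullet> u"
    define w where "w = m - a *\<^sub>R u"
    have mm: "m \<bullet> m = 1" using m by (simp add: norm_eq_1)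
    have "n \<bullet> w = 0" unfolding w_def a_def using un n0
      by (simp add: inner_diff_right inner_commute dot_square_norm power2_eq_square)
    hence "w \<in> tangent_space (frontier \<Omega>) x" using TSx by simp
    hence mw: "m \<bullet> w = 0" using m by blast
    have "w \<bullet> w = m \<bullet> w - a * (u \<bullet> w)" unfolding w_def by (simp add: inner_diff_left)
    also have "u \<bullet> w = 0" unfolding w_def a_def using uu by (simp add: inner_diff_right inner_commute)
    finally have "w \<bullet> w = 0" using mw by simp
    hence w0: "w = 0" by simp
    hence mau: "m = a *\<^sub>R u" unfolding w_def by simp
    hence "a * a = 1" using mm uu by simp
    hence "a = 1 \<or> a = -1" by (metis square_eq_1_iff)
    moreover have "a \<noteq> -1"
    proof
      assume "a = -1"
      hence mu: "m = - u" using mau by simp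
      obtain e where e: "e > 0" "\<And>t. 0 < t \<Longrightarrow> t < e \<Longrightarrow> x + t *\<^sub>R m \<notin> closure \<Omega>" using m by blast
      define t where "t = min e \<delta> / 2"
      have t: "0 < t" "t < e" "t < \<delta>" unfolding t_def using e \<delta> by auto
      have "x - t *\<^sub>R u \<in> \<Omega>" using side t by blast
      moreover have "x + t *\<^sub>R m \<notin> closure \<Omega>" using e t by blast
      ultimately show False using mu closure_subset by auto
    qed
    ultimately show "m = u" using mau by simp
  qed
qed


lemma N_sum: "N = (\<lambda>y. \<Sum>j\<in>UNIV. \<phi>' y (axis j 1) *\<^sub>R axis j 1)"
proof
  fix y
  have "N y = (\<Sum>j\<in>UNIV. (N y $ j) *s axis j 1)" by (simp add: basis_expansion)
  thus "N y = (\<Sum>j\<in>UNIV. \<phi>' y (axis j 1) *\<^sub>R axis j 1)" by (simp add: N_def scalar_mult_eq_scaleR)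
qed

lemma N_diff: assumes "x \<in> V" shows "N differentiable (at x)"
proof -
  obtain D where D: "(\<phi>' has_derivative D) (at x)" using deriv2[OF assms] unfolding differentiable_def by blast
  have "(\<lambda>y. \<phi>' y (axis j 1)) differentiable (at x)" for j
    using blinfun.FDERIV[OF D has_derivative_const[of "axis j 1"]] unfolding differentiable_def by blast
  hence "(\<lambda>y. \<Sum>j\<in>UNIV. \<phi>' y (axis j 1) *\<^sub>R axis j 1) differentiable (at x)"
    by (intro differentiable_sum differentiable_scaleR) auto
  thus ?thesis unfolding N_sum .
qed

lemma nu_diff: assumes "x \<in> V" shows "nu differentiable (at x)"
proof -
  have "(\<lambda>y. norm (N y)) differentiable (at x)"
    by (rule differentiable_compose[OF differentiable_norm_at N_diff[OF assms]]) (use N_nz[OF assms] in auto)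
  hence "(\<lambda>y. (1 / norm (N y)) *\<^sub>R N y) differentiable (at x)"
    using N_nz[OF assms] N_diff[OF assms] by (intro differentiable_scaleR differentiable_divide) auto
  thus ?thesis unfolding nu_def[abs_def] .
qed

lemma nu_norm: "x \<in> V \<Longrightarrow> norm (nu x) = 1"
  using N_nz unfolding nu_def by simp

lemma nu_deriv_orth:
  assumes x: "x \<in> V" and D: "(nu has_derivative D) (at x)"
  shows "nu x \<bullet> D v = 0"
proof -
  have d1: "((\<lambda>y. nu y \<bullet> nu y) has_derivative (\<lambda>h. nu x \<bullet> D h + D h \<bullet> nu x)) (at x)"
    by (rule has_derivative_inner[OF D D])
  obtain d where d: "d > 0" "ball x d \<subseteq> V" using openV x open_contains_ball by blast
  have d2: "((\<lambda>y. nu y \<bullet> nu y) has_derivative (\<lambda>h. 0)) (at x)"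
  proof (rule has_derivative_transform_within[OF has_derivative_const[of 1] d(1)])
    fix y assume "y \<in> UNIV" "dist y x < d"
    hence "y \<in> V" using d(2) by (auto simp: dist_commute)
    thus "1 = nu y \<bullet> nu y" using nu_norm by (simp add: norm_eq_1)
  qed simp
  have "(\<lambda>h. nu x \<bullet> D h + D h \<bullet> nu x) = (\<lambda>h. 0)" by (rule has_derivative_unique[OF d1 d2])
  hence "nu x \<bullet> D v + D v \<bullet> nu x = 0" by metis
  thus ?thesis by (simp add: inner_commute)
qed

end


lemma seg_bound:
  fixes u :: "real^3 \<Rightarrow> real^3" and Du :: "real^3 \<Rightarrow> ((real^3) \<Rightarrow>\<^sub>L (real^3))"
  assumes seg: "closed_segment a b \<subseteq> S"
    and d: "\<And>w. w \<in> S \<Longrightarrow> (u has_derivative blinfun_apply (Du w)) (at w)"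
    and bd: "\<And>w. w \<in> S \<Longrightarrow> norm (Du w - L) \<le> \<epsilon>"
  shows "norm (u b - u a - L (b - a)) \<le> \<epsilon> * norm (b - a)"
proof -
  have "norm ((\<lambda>w. u w - L w) b - (\<lambda>w. u w - L w) a) \<le> \<epsilon> * norm (b - a)"
  proof (rule differentiable_bound[where S="closed_segment a b" and f'="\<lambda>w h. Du w h - L h"])
    show "convex (closed_segment a b)" by simp
    show "((\<lambda>w. u w - L w) has_derivative (\<lambda>h. Du w h - L h)) (at w within closed_segment a b)"
      if "w \<in> closed_segment a b" for w
    proof -
      have "w \<in> S" using seg that by blast
      hence "(u has_derivative blinfun_apply (Du w)) (at w within closed_segment a b)"
        using d has_derivative_at_withinI by blast
      moreover have "(L has_derivative L) (at w within closed_segment a b)"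
        by (rule bounded_linear.has_derivative[OF blinfun.bounded_linear_right has_derivative_ident])
      ultimately show ?thesis by (rule has_derivative_diff)
    qed
    show "onorm (\<lambda>h. Du w h - L h) \<le> \<epsilon>" if "w \<in> closed_segment a b" for w
    proof -
      have "onorm (\<lambda>h. Du w h - L h) = norm (Du w - L)"
        by (simp add: norm_blinfun.rep_eq minus_blinfun.rep_eq fun_diff_def)
      thus ?thesis using bd[of w] seg that by auto
    qed
  qed (rule ends_in_segment)+
  thus ?thesis by (simp add: blinfun.diff_right algebra_simps)
qed


context chart begin

lemma u_deriv_closure:
  fixes u :: "real^3 \<Rightarrow> real^3" and Du :: "real^3 \<Rightarrow> ((real^3) \<Rightarrow>\<^sub>L (real^3))"
  assumes oO: "open \<Omega>" and p: "p \<in> frontier \<Omega>" "p \<in> V" and C1: "C1_up_to_boundary \<Omega> u Du"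
  shows "(u has_derivative blinfun_apply (Du p)) (at p within closure \<Omega>)"
proof -
  have ucont: "continuous_on (closure \<Omega>) u" and ud: "\<And>x. x\<in>\<Omega> \<Longrightarrow> (u has_derivative blinfun_apply (Du x)) (at x)"
    and Dcont: "continuous_on (closure \<Omega>) Du" using C1 unfolding C1_up_to_boundary_def by auto
  have pcl: "p \<in> closure \<Omega>" using p(1) by (simp add: frontier_def)
  have clos: "closure \<Omega> = \<Omega> \<union> frontier \<Omega>" by (rule closure_Un_frontier)
  define n where "n = N p"
  define c where "c = n \<bullet> n"
  define nn where "nn = norm n"
  have n0: "n \<noteq> 0" using N_nz p n_def by simp
  have nnpos: "nn > 0" using n0 nn_def by simp
  have cnn: "c = nn * nn" unfolding c_def nn_def by (simp add: dot_square_norm power2_eq_square)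
  have cpos: "c > 0" using cnn nnpos by simp
  define \<eta> where "\<eta> = min (c / (2*nn)) (c/8)"
  have eta: "\<eta> > 0" "\<eta> * nn \<le> c/2" "\<eta> \<le> c/8"
  proof -
    show "\<eta> > 0" unfolding \<eta>_def using cpos nnpos by simp
    have "\<eta> \<le> c / (2*nn)" unfolding \<eta>_def by simp
    thus "\<eta> * nn \<le> c/2" using nnpos by (simp add: field_simps)
    show "\<eta> \<le> c/8" unfolding \<eta>_def by simp
  qed
  obtain \<delta> where \<delta>: "\<delta>>0" "ball p \<delta> \<subseteq> V"
      "\<forall>a\<in>ball p \<delta>. \<forall>b\<in>ball p \<delta>. \<bar>\<phi> b - \<phi> a - \<phi>' p (b-a)\<bar> \<le> \<eta>*norm(b-a)"
      using LIN[OF p(2) eta(1)] by blast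
  have linp: "\<phi>' p (w + t *\<^sub>R n) = \<phi>' p w + t * c" for w t
    by (simp add: phi'_N n_def[symmetric] c_def inner_add_right)
  have F1: "w \<in> \<Omega>" if "w \<in> ball p \<delta>" "\<phi> w < 0" for w
  proof -
    have "w \<in> V" using that \<delta>(2) by blast
    hence "w \<in> \<Omega> \<inter> V" unfolding inO using that by blast
    thus ?thesis by blast
  qed
  have F2: "\<phi> w \<le> 0" if "w \<in> closure \<Omega>" "w \<in> ball p \<delta>" for w
  proof -
    have wV: "w \<in> V" using that \<delta>(2) by blast
    show ?thesis
    proof (cases "w \<in> \<Omega>")
      case True hence "w \<in> \<Omega> \<inter> V" using wV by blast
      thus ?thesis unfolding inO by simp
    next
      case False hence "w \<in> frontier \<Omega> \<inter> V" using wV that clos by blast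
      thus ?thesis unfolding fr by simp
    qed
  qed
  have F3: "\<phi> (w + (-t) *\<^sub>R n) < 0" if "w \<in> closure \<Omega>" "w \<in> ball p \<delta>" "w + (-t) *\<^sub>R n \<in> ball p \<delta>" "t > 0" for w t
  proof -
    have "\<bar>\<phi> (w + (-t) *\<^sub>R n) - \<phi> w - \<phi>' p ((w + (-t) *\<^sub>R n) - w)\<bar> \<le> \<eta> * norm ((w + (-t) *\<^sub>R n) - w)"
      using \<delta>(3) that(2,3) by blast
    moreover have "\<phi>' p ((w + (-t) *\<^sub>R n) - w) = - t * c" using linp[of 0 "-t"] by simp
    moreover have "norm ((w + (-t) *\<^sub>R n) - w) = t * nn" using that(4) nn_def by simp
    ultimately have "\<phi> (w + (-t) *\<^sub>R n) \<le> \<phi> w - t * c + \<eta> * (t * nn)" by (simp add: abs_le_iff)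
    moreover have "\<eta> * (t * nn) \<le> t * (c/2)" using eta(2) that(4)
      by (metis mult.left_commute mult_left_mono less_imp_le)
    moreover have "t * c > 0" using that(4) cpos by simp
    ultimately show ?thesis using F2[OF that(1,2)] by linarith
  qed
  have F4: "\<phi> (z + (- norm (y - x)) *\<^sub>R n) < 0"
    if xy: "x \<in> closure \<Omega>" "y \<in> closure \<Omega>" "x \<in> ball p \<delta>" "y \<in> ball p \<delta>" "x \<noteq> y"
      and z: "z = (1 - l) *\<^sub>R x + l *\<^sub>R y" "0 \<le> l" "l \<le> 1"
      and zb: "z + (- norm (y - x)) *\<^sub>R n \<in> ball p \<delta>" for x y z l
  proof -
    define s where "s = norm (y - x)"
    have spos: "s > 0" using xy(5) s_def by simp
    have "\<bar>\<phi> y - \<phi> x - \<phi>' p (y - x)\<bar> \<le> \<eta> * norm (y - x)" using \<delta>(3) xy(3,4) by blast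
    hence A: "\<phi>' p (y - x) \<le> - \<phi> x + \<eta> * s" using F2[OF xy(2,4)] s_def by (simp add: abs_le_iff)
    have eq: "(z + (-s) *\<^sub>R n) - x = l *\<^sub>R (y - x) + (-s) *\<^sub>R n" using z(1) by (simp add: algebra_simps)
    have "\<bar>\<phi> (z + (-s) *\<^sub>R n) - \<phi> x - \<phi>' p ((z + (-s) *\<^sub>R n) - x)\<bar> \<le> \<eta> * norm ((z + (-s) *\<^sub>R n) - x)"
      using \<delta>(3) xy(3) zb s_def by blast
    hence B0: "\<bar>\<phi> (z + (-s) *\<^sub>R n) - \<phi> x - \<phi>' p (l *\<^sub>R (y - x) + (-s) *\<^sub>R n)\<bar> \<le> \<eta> * norm (l *\<^sub>R (y - x) + (-s) *\<^sub>R n)"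
      unfolding eq .
    have "\<phi>' p (l *\<^sub>R (y - x) + (-s) *\<^sub>R n) = l * \<phi>' p (y - x) - s * c"
      using linp[of "l *\<^sub>R (y - x)" "-s"] by (simp add: blinfun.scaleR_right)
    with B0 have B: "\<phi> (z + (-s) *\<^sub>R n) \<le> \<phi> x + (l * \<phi>' p (y - x) - s * c) + \<eta> * norm (l *\<^sub>R (y - x) + (-s) *\<^sub>R n)"
      unfolding abs_le_iff by linarith
    have "norm (l *\<^sub>R (y - x) + (-s) *\<^sub>R n) \<le> l * s + s * nn"
      using norm_triangle_ineq[of "l *\<^sub>R (y - x)" "(-s) *\<^sub>R n"] z(2) spos s_def nn_def by simp
    also have "\<dots> \<le> s + s * nn" using z(3) spos by (simp add: mult_right_le_one_le)
    finally have nrm: "norm (l *\<^sub>R (y - x) + (-s) *\<^sub>R n) \<le> s + s * nn" .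
    have C: "\<eta> * norm (l *\<^sub>R (y - x) + (-s) *\<^sub>R n) \<le> \<eta> * s + s * (\<eta> * nn)"
    proof -
      have "\<eta> * norm (l *\<^sub>R (y - x) + (-s) *\<^sub>R n) \<le> \<eta> * (s + s * nn)"
        using mult_left_mono[OF nrm] eta(1) by simp
      thus ?thesis by (simp add: algebra_simps)
    qed
    have D: "s * (\<eta> * nn) \<le> s * (c/2)" using eta(2) spos by (simp add: mult_left_mono)
    have E0: "l * \<phi>' p (y - x) \<le> l * (- \<phi> x + \<eta> * s)" using A z(2) by (simp add: mult_left_mono)
    have E: "l * \<phi>' p (y - x) \<le> l * (\<eta> * s) - l * \<phi> x" using E0 by (simp add: algebra_simps)
    have G: "l * (- \<phi> x) \<le> - \<phi> x" using mult_left_le_one_le[of "- \<phi> x" l] F2[OF xy(1,3)] z(2,3) by linarith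
    have H: "l * (\<eta> * s) \<le> \<eta> * s" using z(2,3) eta(1) spos by (simp add: mult_left_le_one_le)
    have I: "2 * (\<eta> * s) \<le> s * (c / 4)" using eta(3) spos by (simp add: field_simps)
    have J: "s * c > 0" using spos cpos by simp
    have "\<phi> (z + (-s) *\<^sub>R n) < 0"
    proof -
      define X where "X = \<phi> (z + (-s) *\<^sub>R n)"
      define Y where "Y = l * \<phi>' p (y - x)"
      define Z where "Z = \<eta> * norm (l *\<^sub>R (y - x) + (-s) *\<^sub>R n)"
      define A1 where "A1 = \<eta> * s"
      define A2 where "A2 = s * (\<eta> * nn)"
      define A3 where "A3 = l * (\<eta> * s)"
      define A4 where "A4 = l * \<phi> x"
      define A5 where "A5 = s * c"
      have "X \<le> \<phi> x + (Y - A5) + Z" "Z \<le> A1 + A2" "A2 \<le> A5/2" "Y \<le> A3 - A4" "- A4 \<le> - \<phi> x" "A3 \<le> A1"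
        "2 * A1 \<le> A5/4" "A5 > 0"
        using B C D E G H I J unfolding X_def Y_def Z_def A1_def A2_def A3_def A4_def A5_def by (simp_all add: algebra_simps)
      hence "X < 0" by linarith
      thus ?thesis unfolding X_def .
    qed
    thus ?thesis using s_def by simp
  qed
  show ?thesis unfolding has_derivative_within_alt
  proof (intro conjI allI impI)
    show "bounded_linear (blinfun_apply (Du p))" by (rule blinfun.bounded_linear_right)
    fix e :: real assume e: "e > 0"
    define \<epsilon> where "\<epsilon> = e / (2 * nn + 1)"
    have epos: "\<epsilon> > 0" unfolding \<epsilon>_def using e nnpos by simp
    obtain \<rho> where \<rho>: "\<rho> > 0" "\<And>w. w \<in> closure \<Omega> \<Longrightarrow> dist w p < \<rho> \<Longrightarrow> dist (Du w) (Du p) < \<epsilon>"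
      using Dcont pcl epos unfolding continuous_on_iff by metis
    define R where "R = min \<delta> \<rho>"
    define r where "r = R / (2 * nn + 1)"
    have Rpos: "R > 0" unfolding R_def using \<delta> \<rho> by simp
    have rpos: "r > 0" unfolding r_def using Rpos nnpos by simp
    have rR: "r + 2 * r * nn = R"
    proof -
      have "2 * nn + 1 \<noteq> 0" using nnpos by simp
      hence "r * (2 * nn + 1) = R" unfolding r_def by simp
      thus ?thesis by (simp add: algebra_simps)
    qed
    define S where "S = \<Omega> \<inter> ball p R"
    have Sd: "\<And>w. w \<in> S \<Longrightarrow> (u has_derivative blinfun_apply (Du w)) (at w)" using ud S_def by blast
    have Sb: "\<And>w. w \<in> S \<Longrightarrow> norm (Du w - Du p) \<le> \<epsilon>"
    proof -
      fix w assume "w \<in> S"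
      hence "w \<in> closure \<Omega>" "dist w p < \<rho>" unfolding S_def R_def using closure_subset
        by (auto simp: dist_commute)
      from \<rho>(2)[OF this] show "norm (Du w - Du p) \<le> \<epsilon>" by (simp add: dist_norm)
    qed
    have ballR: "ball p R \<subseteq> ball p \<delta>" unfolding R_def by auto
    have main: "norm (u y - u x - Du p (y - x)) \<le> e * norm (y - x)"
      if xy: "x \<in> \<Omega>" "y \<in> \<Omega>" "x \<in> ball p r" "y \<in> ball p r" for x y
    proof (cases "x = y")
      case True thus ?thesis by simp
    next
      case False
      define s where "s = norm (y - x)"
      have spos: "s > 0" using False s_def by simp
      have s2r: "s < 2 * r"
      proof -
        have "s \<le> dist x p + dist y p" unfolding s_def using dist_triangle[of y x p]
          by (simp add: dist_norm norm_minus_commute[of p x])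
        thus ?thesis using xy(3,4) by (simp add: dist_commute)
      qed
      define a where "a = x + (-s) *\<^sub>R n"
      define b where "b = y + (-s) *\<^sub>R n"
      have shiftball: "w + (-t) *\<^sub>R n \<in> ball p R" if "w \<in> ball p r" "0 \<le> t" "t \<le> s" for w t
      proof -
        have "dist p (w + (-t) *\<^sub>R n) \<le> dist p w + t * nn"
          using dist_triangle[of p "w + (-t) *\<^sub>R n" w] that(2) nn_def by (simp add: dist_norm)
        also have "\<dots> < r + 2 * r * nn"
        proof -
          have "t * nn \<le> s * nn" using that(3) nnpos by (simp add: mult_right_mono)
          also have "\<dots> < 2 * r * nn" using s2r nnpos by simp
          finally show ?thesis using that(1) by simp
        qed
        finally show ?thesis using rR by simp
      qed
      have rsub: "ball p r \<subseteq> ball p R"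
      proof (rule subset_ball)
        have "0 \<le> 2 * r * nn" using rpos nnpos by simp
        thus "r \<le> R" using rR by linarith
      qed
      have vert: "closed_segment w (w + (-s) *\<^sub>R n) \<subseteq> S" if w: "w \<in> \<Omega>" "w \<in> ball p r" for w
      proof
        fix q assume "q \<in> closed_segment w (w + (-s) *\<^sub>R n)"
        then obtain l where l: "0 \<le> l" "l \<le> 1" "q = (1 - l) *\<^sub>R w + l *\<^sub>R (w + (-s) *\<^sub>R n)"
          unfolding closed_segment_def by blast
        have q: "q = w + (-(l * s)) *\<^sub>R n" using l(3) by (simp add: algebra_simps)
        have qR: "q \<in> ball p R" unfolding q using shiftball[OF w(2), of "l * s"] l spos
          by (simp add: mult_left_le_one_le)
        show "q \<in> S"
        proof (cases "l = 0")
          case True thus ?thesis using q w rsub unfolding S_def by auto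
        next
          case False
          hence "l * s > 0" using l spos by simp
          hence ls: "l * s > 0" .
          have wc: "w \<in> closure \<Omega>" using w(1) closure_subset by blast
          have wb: "w \<in> ball p \<delta>" using w(2) rsub ballR by blast
          have qb: "w + (-(l * s)) *\<^sub>R n \<in> ball p \<delta>" using qR ballR unfolding q by blast
          have "\<phi> q < 0" unfolding q by (rule F3[OF wc wb qb ls])
          thus ?thesis using F1 qR ballR unfolding S_def by blast
        qed
      qed
      have mid: "closed_segment a b \<subseteq> S"
      proof
        fix q assume "q \<in> closed_segment a b"
        then obtain l where l: "0 \<le> l" "l \<le> 1" "q = (1 - l) *\<^sub>R a + l *\<^sub>R b"
          unfolding closed_segment_def by blast
        define z where "z = (1 - l) *\<^sub>R x + l *\<^sub>R y"
        have q: "q = z + (- norm (y - x)) *\<^sub>R n" unfolding z_def l(3) a_def b_def s_def by (simp add: algebra_simps)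
        have zr: "z \<in> ball p r"
          using convex_ball[of p r] xy(3,4) l unfolding z_def convex_alt by blast
        have qR: "q \<in> ball p R" unfolding q s_def[symmetric] using shiftball[OF zr, of s] spos by simp
        have "\<phi> q < 0" unfolding q
        proof (rule F4[OF _ _ _ _ False z_def l(1,2)])
          show "x \<in> closure \<Omega>" "y \<in> closure \<Omega>" using xy(1,2) closure_subset by blast+
          show "x \<in> ball p \<delta>" "y \<in> ball p \<delta>" using xy(3,4) rsub ballR by blast+
          show "z + (- norm (y - x)) *\<^sub>R n \<in> ball p \<delta>" using qR ballR q by blast
        qed
        thus "q \<in> S" using F1 qR ballR unfolding S_def by blast
      qed
      have b1: "norm (u a - u x - Du p (a - x)) \<le> \<epsilon> * norm (a - x)"
        using seg_bound[OF vert[OF xy(1,3)] Sd Sb] unfolding a_def .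
      have b2: "norm (u b - u a - Du p (b - a)) \<le> \<epsilon> * norm (b - a)"
        by (rule seg_bound[OF mid Sd Sb])
      have b3: "norm (u y - u b - Du p (y - b)) \<le> \<epsilon> * norm (y - b)"
        by (rule seg_bound[OF vert[OF xy(2,4), folded b_def, unfolded closed_segment_commute[of y]] Sd Sb])
      have nab: "norm (a - x) = s * nn" "norm (b - a) = s" "norm (y - b) = s * nn"
        unfolding a_def b_def s_def nn_def by (simp_all add: norm_minus_commute)
      have "u y - u x - Du p (y - x) = (u y - u b - Du p (y - b)) + (u b - u a - Du p (b - a)) + (u a - u x - Du p (a - x))"
        by (simp add: blinfun.diff_right algebra_simps)
      hence "norm (u y - u x - Du p (y - x)) = norm ((u y - u b - Du p (y - b)) + (u b - u a - Du p (b - a)) + (u a - u x - Du p (a - x)))" by (simp only:)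
      also have "\<dots> \<le> norm (u y - u b - Du p (y - b)) + norm (u b - u a - Du p (b - a)) + norm (u a - u x - Du p (a - x))"
        using norm_triangle_ineq[of "(u y - u b - Du p (y - b)) + (u b - u a - Du p (b - a))" "u a - u x - Du p (a - x)"]
          norm_triangle_ineq[of "u y - u b - Du p (y - b)" "u b - u a - Du p (b - a)"] by linarith
      also have "\<dots> \<le> \<epsilon> * (s * nn) + \<epsilon> * s + \<epsilon> * (s * nn)" using b1 b2 b3 unfolding nab by linarith
      also have "\<dots> = (\<epsilon> * (2 * nn + 1)) * s" by (simp add: algebra_simps)
      also have "\<dots> = e * norm (y - x)" unfolding \<epsilon>_def s_def using nnpos by simp
      finally show ?thesis .
    qed
    have clsub: "closure \<Omega> \<inter> ball p r \<subseteq> closure (\<Omega> \<inter> ball p r)"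
      using open_Int_closure_subset[of "ball p r" \<Omega>] by (auto simp: Int_commute)
    have clsub2: "closure (\<Omega> \<inter> ball p r) \<subseteq> closure \<Omega>" by (simp add: closure_mono)
    have main2: "norm (u y - u x - Du p (y - x)) - e * norm (y - x) \<le> 0"
      if xy: "x \<in> \<Omega>" "x \<in> ball p r" "y \<in> closure \<Omega>" "y \<in> ball p r" for x y
    proof (rule continuous_le_on_closure[where S="\<Omega> \<inter> ball p r" and f="\<lambda>y. norm (u y - u x - Du p (y - x)) - e * norm (y - x)"])
      show "continuous_on (closure (\<Omega> \<inter> ball p r)) (\<lambda>y. norm (u y - u x - Du p (y - x)) - e * norm (y - x))"
        by (intro continuous_intros continuous_on_subset[OF ucont clsub2]
              continuous_on_compose2[OF blinfun.bounded_linear_right[THEN linear_continuous_on]]) auto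
      show "y \<in> closure (\<Omega> \<inter> ball p r)" using clsub xy by blast
      show "norm (u y' - u x - Du p (y' - x)) - e * norm (y' - x) \<le> 0" if "y' \<in> \<Omega> \<inter> ball p r" for y'
        using main[of x y'] xy that by simp
    qed
    have main3: "norm (u y - u x - Du p (y - x)) - e * norm (y - x) \<le> 0"
      if xy: "x \<in> closure \<Omega>" "x \<in> ball p r" "y \<in> closure \<Omega>" "y \<in> ball p r" for x y
    proof (rule continuous_le_on_closure[where S="\<Omega> \<inter> ball p r" and f="\<lambda>x. norm (u y - u x - Du p (y - x)) - e * norm (y - x)"])
      show "continuous_on (closure (\<Omega> \<inter> ball p r)) (\<lambda>x. norm (u y - u x - Du p (y - x)) - e * norm (y - x))"
        by (intro continuous_intros continuous_on_subset[OF ucont clsub2]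
              continuous_on_compose2[OF blinfun.bounded_linear_right[THEN linear_continuous_on]]) auto
      show "x \<in> closure (\<Omega> \<inter> ball p r)" using clsub xy by blast
      show "norm (u y - u x' - Du p (y - x')) - e * norm (y - x') \<le> 0" if "x' \<in> \<Omega> \<inter> ball p r" for x'
        using main2[of x' y] xy that by simp
    qed
    show "\<exists>d>0. \<forall>y\<in>closure \<Omega>. norm (y - p) < d \<longrightarrow> norm (u y - u p - Du p (y - p)) \<le> e * norm (y - p)"
    proof (intro exI[of _ r] conjI ballI impI)
      show "r > 0" by (rule rpos)
      fix y assume "y \<in> closure \<Omega>" "norm (y - p) < r"
      thus "norm (u y - u p - Du p (y - p)) \<le> e * norm (y - p)"
        using main3[of p y] pcl rpos by (simp add: dist_norm norm_minus_commute)
    qed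
  qed
qed

end



lemma curve_chain:
  fixes F :: "real^3 \<Rightarrow> 'b::real_normed_vector"
  assumes F: "(F has_derivative L) (at p within S)" and g: "surface_curve S p \<gamma> v"
  shows "((F \<circ> \<gamma>) has_derivative (\<lambda>h. h *\<^sub>R L v)) (at 0)"
proof -
  have g1: "range \<gamma> \<subseteq> S" "\<gamma> 0 = p" "(\<gamma> has_derivative (\<lambda>h. h *\<^sub>R v)) (at 0)"
    using g unfolding surface_curve_def has_vector_derivative_def by auto
  have "(F has_derivative L) (at (\<gamma> 0) within \<gamma> ` UNIV)"
    using has_derivative_subset[OF F g1(1)] g1(2) by simp
  from diff_chain_within[OF g1(3) this] have "((F \<circ> \<gamma>) has_derivative (L \<circ> (\<lambda>h. h *\<^sub>R v))) (at 0)" by simp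
  moreover have "L \<circ> (\<lambda>h. h *\<^sub>R v) = (\<lambda>h. h *\<^sub>R L v)"
    using has_derivative_linear[OF F] by (auto simp: linear_scale)
  ultimately show ?thesis by simp
qed

lemma curve_chain_real:
  fixes F :: "real^3 \<Rightarrow> real"
  assumes F: "(F has_derivative L) (at p within S)" and g: "surface_curve S p \<gamma> v"
  shows "((F \<circ> \<gamma>) has_real_derivative L v) (at 0)"
proof -
  have e: "(\<lambda>h. h *\<^sub>R L v) = (*) (L v)" by (rule ext) (simp add: mult.commute)
  show ?thesis using curve_chain[OF F g] unfolding has_field_derivative_def e .
qed

definition gradv :: "(real^3 \<Rightarrow> real) \<Rightarrow> real^3" where "gradv L = (\<chi> j. L (axis j 1))"

lemma SG:
  fixes F :: "real^3 \<Rightarrow> real"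
  assumes TSp: "tangent_space S p = {v. n \<bullet> v = 0}" and n1: "norm n = 1"
    and F: "(F has_derivative L) (at p within S)"
  shows "surface_grad S F p = gradv L - (gradv L \<bullet> n) *\<^sub>R n"
proof -
  define G where "G = gradv L"
  define g0 where "g0 = G - (G \<bullet> n) *\<^sub>R n"
  have nn: "n \<bullet> n = 1" using n1 by (simp add: norm_eq_1)
  have Lv: "L v = G \<bullet> v" for v unfolding G_def gradv_def by (rule lin_grad[OF has_derivative_linear[OF F]])
  have g0n: "n \<bullet> g0 = 0" unfolding g0_def using nn by (simp add: inner_diff_right inner_commute)
  have g0v: "g0 \<bullet> v = L v" if "n \<bullet> v = 0" for v
  proof -
    have "g0 \<bullet> v = G \<bullet> v - (G \<bullet> n) * (n \<bullet> v)" unfolding g0_def by (simp add: inner_diff_left)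
    thus ?thesis using that Lv by simp
  qed
  show ?thesis unfolding surface_grad_def G_def[symmetric] g0_def[symmetric]
  proof (rule the_equality)
    show "g0 \<in> tangent_space S p \<and> (\<forall>\<gamma> v. surface_curve S p \<gamma> v \<longrightarrow> ((F \<circ> \<gamma>) has_real_derivative g0 \<bullet> v) (at 0))"
    proof (intro conjI allI impI)
      show "g0 \<in> tangent_space S p" using TSp g0n by simp
      fix \<gamma> v assume g: "surface_curve S p \<gamma> v"
      hence "v \<in> tangent_space S p" unfolding tangent_space_def by blast
      hence "n \<bullet> v = 0" using TSp by simp
      thus "((F \<circ> \<gamma>) has_real_derivative g0 \<bullet> v) (at 0)" using curve_chain_real[OF F g] g0v by simp
    qed
  next
    fix g assume g: "g \<in> tangent_space S p \<and> (\<forall>\<gamma> v. surface_curve S p \<gamma> v \<longrightarrow> ((F \<circ> \<gamma>) has_real_derivative g \<bullet> v) (at 0))"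
    define w where "w = g - g0"
    have "n \<bullet> w = 0" using g TSp g0n unfolding w_def by (simp add: inner_diff_right)
    hence "w \<in> tangent_space S p" using TSp by simp
    then obtain \<gamma> where c: "surface_curve S p \<gamma> w" unfolding tangent_space_def by blast
    have "g \<bullet> w = g0 \<bullet> w"
    proof (rule DERIV_unique)
      show "((F \<circ> \<gamma>) has_real_derivative g \<bullet> w) (at 0)" using g c by blast
      show "((F \<circ> \<gamma>) has_real_derivative g0 \<bullet> w) (at 0)"
        using curve_chain_real[OF F c] g0v[OF \<open>n \<bullet> w = 0\<close>] by simp
    qed
    hence "w \<bullet> w = 0" unfolding w_def by (simp add: inner_diff_left)
    thus "g = g0" unfolding w_def by simp
  qed
qed

definition tr3' :: "(real^3 \<Rightarrow> real^3) \<Rightarrow> real" where "tr3' M = (\<Sum>i\<in>UNIV. M (axis i 1) $ i)"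

lemma SD:
  fixes F :: "real^3 \<Rightarrow> real^3"
  assumes TSp: "tangent_space S p = {v. n \<bullet> v = 0}" and n1: "norm n = 1"
    and F: "(F has_derivative M) (at p within S)"
  shows "surface_div S F p = tr3 M - n \<bullet> M n"
proof -
  have Fi: "((\<lambda>x. F x $ i) has_derivative (\<lambda>v. M v $ i)) (at p within S)" for i
    using bounded_linear.has_derivative[OF bounded_linear_vec_nth F] .
  have lin: "linear M" using has_derivative_linear[OF F] .
  have gi: "gradv (\<lambda>v. M v $ i) \<bullet> n = M n $ i" for i
    unfolding gradv_def by (rule lin_grad[symmetric]) (use lin in \<open>simp add: linear_iff\<close>)
  have "surface_div S F p = (\<Sum>i\<in>UNIV. (gradv (\<lambda>v. M v $ i) - (gradv (\<lambda>v. M v $ i) \<bullet> n) *\<^sub>R n) $ i)"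
    unfolding surface_div_def using SG[OF TSp n1 Fi] by simp
  also have "\<dots> = (\<Sum>i\<in>UNIV. M (axis i 1) $ i - M n $ i * n $ i)"
    unfolding gi by (simp add: gradv_def)
  also have "\<dots> = tr3 M - n \<bullet> M n"
    unfolding tr3_def by (simp add: sum_subtractf inner_vec_def mult.commute)
  finally show ?thesis .
qed

lemma SGEQ:
  fixes F H :: "real^3 \<Rightarrow> real"
  assumes TSp: "tangent_space S p = {v. n \<bullet> v = 0}" and n1: "norm n = 1"
    and F: "(F has_derivative LF) (at p within S)" and H: "(H has_derivative LH) (at p within S)"
    and cv: "\<And>v. n \<bullet> v = 0 \<Longrightarrow> \<exists>\<gamma>. surface_curve S p \<gamma> v \<and> (\<forall>t. F (\<gamma> t) = H (\<gamma> t))"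
  shows "surface_grad S F p = surface_grad S H p"
proof -
  have nn: "n \<bullet> n = 1" using n1 by (simp add: norm_eq_1)
  have eqv: "LF v = LH v" if v0: "n \<bullet> v = 0" for v
  proof -
    obtain \<gamma> where g: "surface_curve S p \<gamma> v" "\<forall>t. F (\<gamma> t) = H (\<gamma> t)" using cv[OF v0] by blast
    have "F \<circ> \<gamma> = H \<circ> \<gamma>" using g(2) by auto
    thus ?thesis using DERIV_unique[OF curve_chain_real[OF F g(1)]] curve_chain_real[OF H g(1)] by simp
  qed
  define D where "D = gradv LF - gradv LH"
  have Dv: "D \<bullet> v = 0" if "n \<bullet> v = 0" for v
    unfolding D_def inner_diff_left using eqv[OF that]
      lin_grad[OF has_derivative_linear[OF F], of v] lin_grad[OF has_derivative_linear[OF H], of v]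
    by (simp add: gradv_def)
  define PD where "PD = D - (D \<bullet> n) *\<^sub>R n"
  have "n \<bullet> PD = 0" unfolding PD_def using nn by (simp add: inner_diff_right inner_commute)
  hence "D \<bullet> PD = 0" by (rule Dv)
  moreover have "n \<bullet> PD = 0" by fact
  ultimately have "PD \<bullet> PD = 0" unfolding PD_def[of] by (simp add: inner_diff_left inner_commute)
  hence "PD = 0" by simp
  hence "gradv LF - (gradv LF \<bullet> n) *\<^sub>R n = gradv LH - (gradv LH \<bullet> n) *\<^sub>R n"
    unfolding PD_def D_def by (simp add: inner_diff_left algebra_simps)
  thus ?thesis using SG[OF TSp n1 F] SG[OF TSp n1 H] by simp
qed



context chart begin

lemma TSn:
  assumes x: "x \<in> frontier \<Omega>" "x \<in> V"
  shows "tangent_space (frontier \<Omega>) x = {v. nu x \<bullet> v = 0}"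
proof -
  have "nu x \<bullet> v = 0 \<longleftrightarrow> N x \<bullet> v = 0" for v
    using N_nz[OF x(2)] unfolding nu_def by simp
  thus ?thesis using TS[OF x] by simp
qed

lemma near_frontier:
  assumes oO: "open \<Omega>" and g: "surface_curve (frontier \<Omega>) p \<gamma> v" and p: "p \<in> V"
  shows "\<exists>d>0. \<forall>t. \<bar>t\<bar> < d \<longrightarrow> outward_normal \<Omega> (\<gamma> t) = nu (\<gamma> t)"
proof -
  have g1: "range \<gamma> \<subseteq> frontier \<Omega>" "\<gamma> 0 = p" "(\<gamma> has_vector_derivative v) (at 0)"
    using g unfolding surface_curve_def by auto
  obtain d where d: "d > 0" "\<And>t. \<bar>t\<bar> < d \<Longrightarrow> \<gamma> t \<in> V" using curve_local[OF g1(3) openV] g1(2) p by auto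
  show ?thesis
  proof (intro exI[of _ d] conjI allI impI)
    fix t :: real assume "\<bar>t\<bar> < d"
    thus "outward_normal \<Omega> (\<gamma> t) = nu (\<gamma> t)" using ON[OF oO _ d(2)] g1(1) by blast
  qed (rule d(1))
qed

lemma SO:
  assumes oO: "open \<Omega>" and p: "p \<in> frontier \<Omega>" "p \<in> V" and Dn: "(nu has_derivative Dn) (at p)"
    and v: "nu p \<bullet> v = 0"
  shows "shape_operator \<Omega> p v = Dn v"
  unfolding shape_operator_def
proof (rule the_equality)
  have works: "((outward_normal \<Omega> \<circ> \<gamma>) has_vector_derivative Dn v) (at 0)"
    if g: "surface_curve (frontier \<Omega>) p \<gamma> v" for \<gamma>
  proof -
    have "(nu has_derivative Dn) (at p within frontier \<Omega>)" using Dn has_derivative_at_withinI by blast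
    from curve_chain[OF this g] have c: "((nu \<circ> \<gamma>) has_derivative (\<lambda>h. h *\<^sub>R Dn v)) (at 0)" .
    obtain d where d: "d > 0" "\<And>t. \<bar>t\<bar> < d \<Longrightarrow> outward_normal \<Omega> (\<gamma> t) = nu (\<gamma> t)"
      using near_frontier[OF oO g p(2)] by blast
    have "((outward_normal \<Omega> \<circ> \<gamma>) has_derivative (\<lambda>h. h *\<^sub>R Dn v)) (at 0)"
    proof (rule has_derivative_transform_within[OF c d(1)])
      fix t :: real assume "t \<in> UNIV" "dist t 0 < d"
      thus "(nu \<circ> \<gamma>) t = (outward_normal \<Omega> \<circ> \<gamma>) t" using d(2)[of t] by (simp add: dist_real_def)
    qed simp
    thus ?thesis unfolding has_vector_derivative_def .
  qed
  show "\<forall>\<gamma>. surface_curve (frontier \<Omega>) p \<gamma> v \<longrightarrow> ((outward_normal \<Omega> \<circ> \<gamma>) has_vector_derivative Dn v) (at 0)"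
    using works by blast
  fix w assume w: "\<forall>\<gamma>. surface_curve (frontier \<Omega>) p \<gamma> v \<longrightarrow> ((outward_normal \<Omega> \<circ> \<gamma>) has_vector_derivative w) (at 0)"
  have "v \<in> tangent_space (frontier \<Omega>) p" using TSn[OF p] v by simp
  then obtain \<gamma> where g: "surface_curve (frontier \<Omega>) p \<gamma> v" unfolding tangent_space_def by blast
  show "w = Dn v" using vector_derivative_unique_at[OF w[rule_format, OF g] works[OF g]] .
qed


lemma derivs:
  fixes u :: "real^3 \<Rightarrow> real^3" and Du :: "real^3 \<Rightarrow> ((real^3) \<Rightarrow>\<^sub>L (real^3))"
  assumes oO: "open \<Omega>" and p: "p \<in> frontier \<Omega>" "p \<in> V" and C1: "C1_up_to_boundary \<Omega> u Du"
    and Dn: "(nu has_derivative Dn) (at p)"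
  defines "Lf \<equiv> \<lambda>h. u p \<bullet> Dn h + Du p h \<bullet> nu p"
    and "Mt \<equiv> \<lambda>h. Du p h - ((u p \<bullet> nu p) *\<^sub>R Dn h + (u p \<bullet> Dn h + Du p h \<bullet> nu p) *\<^sub>R nu p)"
  shows "(normal_comp \<Omega> u has_derivative Lf) (at p within frontier \<Omega>)"
    and "(tangential_part \<Omega> u has_derivative Mt) (at p within frontier \<Omega>)"
    and "((\<lambda>x. normal_comp \<Omega> u x *\<^sub>R tangential_part \<Omega> u x) has_derivative
           (\<lambda>h. normal_comp \<Omega> u p *\<^sub>R Mt h + Lf h *\<^sub>R tangential_part \<Omega> u p)) (at p within frontier \<Omega>)"
proof -
  have fc: "frontier \<Omega> \<subseteq> closure \<Omega>" by (simp add: frontier_def)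
  have uD: "(u has_derivative blinfun_apply (Du p)) (at p within frontier \<Omega>)"
    using has_derivative_subset[OF u_deriv_closure[OF oO p C1] fc] .
  have nD: "(nu has_derivative Dn) (at p within frontier \<Omega>)" using Dn has_derivative_at_withinI by blast
  have f1: "((\<lambda>x. u x \<bullet> nu x) has_derivative Lf) (at p within frontier \<Omega>)"
    unfolding Lf_def by (rule has_derivative_inner[OF uD nD])
  have t1: "((\<lambda>x. u x - (u x \<bullet> nu x) *\<^sub>R nu x) has_derivative Mt) (at p within frontier \<Omega>)"
    unfolding Mt_def using has_derivative_diff[OF uD has_derivative_scaleR[OF f1 nD]] unfolding Lf_def .
  obtain d where d: "d > 0" "ball p d \<subseteq> V" using openV p(2) open_contains_ball by blast
  have agree: "outward_normal \<Omega> x = nu x" if "x \<in> frontier \<Omega>" "dist x p < d" for x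
  proof -
    have "x \<in> V" using that(2) d(2) by (auto simp: dist_commute)
    thus ?thesis using ON[OF oO that(1)] by blast
  qed
  show nc: "(normal_comp \<Omega> u has_derivative Lf) (at p within frontier \<Omega>)"
  proof (rule has_derivative_transform_within[OF f1 d(1) p(1)])
    fix x assume "x \<in> frontier \<Omega>" "dist x p < d"
    thus "u x \<bullet> nu x = normal_comp \<Omega> u x" using agree unfolding normal_comp_def by simp
  qed
  show tp: "(tangential_part \<Omega> u has_derivative Mt) (at p within frontier \<Omega>)"
  proof (rule has_derivative_transform_within[OF t1 d(1) p(1)])
    fix x assume "x \<in> frontier \<Omega>" "dist x p < d"
    thus "u x - (u x \<bullet> nu x) *\<^sub>R nu x = tangential_part \<Omega> u x"
      using agree unfolding tangential_part_def normal_comp_def by simp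
  qed
  show "((\<lambda>x. normal_comp \<Omega> u x *\<^sub>R tangential_part \<Omega> u x) has_derivative
           (\<lambda>h. normal_comp \<Omega> u p *\<^sub>R Mt h + Lf h *\<^sub>R tangential_part \<Omega> u p)) (at p within frontier \<Omega>)"
    by (rule has_derivative_scaleR[OF nc tp])
qed

lemma div_boundary:
  fixes u :: "real^3 \<Rightarrow> real^3" and Du :: "real^3 \<Rightarrow> ((real^3) \<Rightarrow>\<^sub>L (real^3))"
  assumes C1: "C1_up_to_boundary \<Omega> u Du" and dv: "\<forall>x\<in>\<Omega>. divergence (Du x) = 0"
    and p: "p \<in> closure \<Omega>"
  shows "divergence (Du p) = 0"
proof (rule continuous_constant_on_closure[where f="\<lambda>x. divergence (Du x)", OF _ _ p])
  have Dcont: "continuous_on (closure \<Omega>) Du" using C1 unfolding C1_up_to_boundary_def by auto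
  show "continuous_on (closure \<Omega>) (\<lambda>x. divergence (Du x))"
    unfolding divergence_def by (intro continuous_intros Dcont)
  show "\<And>x. x \<in> \<Omega> \<Longrightarrow> divergence (Du x) = 0" using dv by blast
qed


lemma point_formula:
  fixes u :: "real^3 \<Rightarrow> real^3" and Du :: "real^3 \<Rightarrow> ((real^3) \<Rightarrow>\<^sub>L (real^3))"
  assumes oO: "open \<Omega>" and p: "p \<in> frontier \<Omega>" "p \<in> V" and C1: "C1_up_to_boundary \<Omega> u Du"
    and dv: "\<forall>x\<in>\<Omega>. divergence (Du x) = 0"
    and curv: "principal_curvatures \<Omega> p k1 k2"
  shows "blinfun_apply (Du p) (u p) \<bullet> outward_normal \<Omega> p
              = tangential_part \<Omega> u p \<bullet> surface_grad (frontier \<Omega>) (normal_comp \<Omega> u) p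
                - normal_comp \<Omega> u p * surface_div (frontier \<Omega>) (tangential_part \<Omega> u) p
                - (k1 + k2) * (normal_comp \<Omega> u p)^2
                - tangential_part \<Omega> u p \<bullet> shape_operator \<Omega> p (tangential_part \<Omega> u p)
          \<and> blinfun_apply (Du p) (u p) \<bullet> outward_normal \<Omega> p
              = 2 * (tangential_part \<Omega> u p \<bullet> surface_grad (frontier \<Omega>) (normal_comp \<Omega> u) p)
                - surface_div (frontier \<Omega>) (\<lambda>x. normal_comp \<Omega> u x *\<^sub>R tangential_part \<Omega> u x) p
                - (k1 + k2) * (normal_comp \<Omega> u p)^2
                - tangential_part \<Omega> u p \<bullet> shape_operator \<Omega> p (tangential_part \<Omega> u p)"
proof -
  obtain Dn where Dn: "(nu has_derivative Dn) (at p)" using nu_diff[OF p(2)] unfolding differentiable_def by blast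
  have linDn: "linear Dn" using has_derivative_linear[OF Dn] .
  define n where "n = nu p"
  define B where "B = blinfun_apply (Du p)"
  define a where "a = u p"
  define an where "an = a \<bullet> n"
  define aT where "aT = a - an *\<^sub>R n"
  define Lf where "Lf = (\<lambda>h. u p \<bullet> Dn h + Du p h \<bullet> nu p)"
  define Mt where "Mt = (\<lambda>h. Du p h - ((u p \<bullet> nu p) *\<^sub>R Dn h + (u p \<bullet> Dn h + Du p h \<bullet> nu p) *\<^sub>R nu p))"
  define K where "K = (\<lambda>h. normal_comp \<Omega> u p *\<^sub>R Mt h + Lf h *\<^sub>R tangential_part \<Omega> u p)"
  note dd = derivs[OF oO p C1 Dn]
  have onp: "outward_normal \<Omega> p = n" using ON[OF oO p] n_def by simp
  have ncp: "normal_comp \<Omega> u p = an" unfolding normal_comp_def onp an_def a_def ..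
  have tpp: "tangential_part \<Omega> u p = aT" unfolding tangential_part_def ncp onp aT_def a_def ..
  have n1: "norm n = 1" using nu_norm[OF p(2)] n_def by simp
  have nn: "n \<bullet> n = 1" using n1 by (simp add: norm_eq_1)
  have TSp: "tangent_space (frontier \<Omega>) p = {v. n \<bullet> v = 0}" using TSn[OF p] n_def by simp
  have atn: "n \<bullet> aT = 0" unfolding aT_def an_def using nn by (simp add: inner_diff_right inner_commute)
  have a_dec: "a = aT + an *\<^sub>R n" unfolding aT_def by simp
  have orth: "n \<bullet> Dn w = 0" for w using nu_deriv_orth[OF p(2) Dn] n_def by simp
  have Lf_eq: "Lf = (\<lambda>h. a \<bullet> Dn h + B h \<bullet> n)" unfolding Lf_def a_def B_def n_def ..
  have Mt_eq: "Mt = (\<lambda>h. B h - (an *\<^sub>R Dn h + Lf h *\<^sub>R n))"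
    unfolding Mt_def Lf_def B_def an_def a_def n_def ..
  have K_eq: "K = (\<lambda>h. an *\<^sub>R Mt h + Lf h *\<^sub>R aT)" unfolding K_def ncp tpp ..
  have linLf: "linear Lf" using has_derivative_linear[OF dd(1)] unfolding Lf_def .
  define G where "G = gradv Lf"
  have LfG: "Lf w = G \<bullet> w" for w unfolding G_def gradv_def by (rule lin_grad[OF linLf])
  have Gi: "G $ i = Lf (axis i 1)" for i unfolding G_def gradv_def by simp
  have sumLf: "(\<Sum>i\<in>UNIV. Lf (axis i 1) * w $ i) = Lf w" for w
  proof -
    have "Lf w = (\<Sum>i\<in>UNIV. G $ i * w $ i)" using LfG[of w] by (simp add: inner_vec_def)
    thus ?thesis by (simp add: Gi)
  qed
  have sg: "surface_grad (frontier \<Omega>) (normal_comp \<Omega> u) p = G - (G \<bullet> n) *\<^sub>R n"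
    using SG[OF TSp n1 dd(1)] unfolding G_def Lf_def .
  have sdt: "surface_div (frontier \<Omega>) (tangential_part \<Omega> u) p = tr3 Mt - n \<bullet> Mt n"
    using SD[OF TSp n1 dd(2)] unfolding Mt_def .
  have sdf: "surface_div (frontier \<Omega>) (\<lambda>x. normal_comp \<Omega> u x *\<^sub>R tangential_part \<Omega> u x) p = tr3 K - n \<bullet> K n"
    using SD[OF TSp n1 dd(3)] unfolding K_def Mt_def Lf_def .
  have so: "shape_operator \<Omega> p aT = Dn aT" using SO[OF oO p Dn] atn n_def by simp
  obtain e1 e2 where e: "e1 \<in> tangent_space (frontier \<Omega>) p" "e2 \<in> tangent_space (frontier \<Omega>) p"
    "norm e1 = 1" "norm e2 = 1" "e1 \<bullet> e2 = 0" "shape_operator \<Omega> p e1 = k1 *\<^sub>R e1" "shape_operator \<Omega> p e2 = k2 *\<^sub>R e2"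
    using curv unfolding principal_curvatures_def by blast
  have en: "n \<bullet> e1 = 0" "n \<bullet> e2 = 0" using e(1,2) TSp by auto
  have De: "Dn e1 = k1 *\<^sub>R e1" "Dn e2 = k2 *\<^sub>R e2"
    using SO[OF oO p Dn, of e1] SO[OF oO p Dn, of e2] en e(6,7) n_def by auto
  have trDn: "tr3 Dn = k1 + k2"
  proof -
    have "tr3 Dn = e1 \<bullet> Dn e1 + e2 \<bullet> Dn e2 + n \<bullet> Dn n"
      by (rule trace_orthonormal[OF linDn e(3,4) n1 e(5)]) (use en in \<open>simp_all add: inner_commute\<close>)
    also have "\<dots> = k1 + k2" using De orth e(3,4) by (simp add: norm_eq_1)
    finally show ?thesis .
  qed
  have trB: "tr3 B = 0"
  proof -
    have "p \<in> closure \<Omega>" using p(1) by (simp add: frontier_def)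
    from div_boundary[OF C1 dv this] show ?thesis unfolding divergence_def tr3_def B_def .
  qed
  have linB: "linear B" unfolding B_def by (rule bounded_linear.linear[OF blinfun.bounded_linear_right])
  have X1: "aT \<bullet> (G - (G \<bullet> n) *\<^sub>R n) = Lf aT"
    using atn by (simp add: inner_diff_right LfG inner_commute)
  have X2: "Lf aT = aT \<bullet> Dn aT + B aT \<bullet> n"
  proof -
    have "a \<bullet> Dn aT = aT \<bullet> Dn aT + an * (n \<bullet> Dn aT)" by (subst a_dec) (simp add: inner_add_left)
    thus ?thesis using orth Lf_eq by simp
  qed
  have trMt: "tr3 Mt = tr3 B - an * tr3 Dn - Lf n"
  proof -
    have "tr3 Mt = (\<Sum>i\<in>UNIV. B (axis i 1) $ i - (an * Dn (axis i 1) $ i + Lf (axis i 1) * n $ i))"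
      unfolding tr3_def Mt_eq by simp
    also have "\<dots> = tr3 B - an * tr3 Dn - (\<Sum>i\<in>UNIV. Lf (axis i 1) * n $ i)"
      unfolding tr3_def by (simp add: sum_subtractf sum.distrib sum_distrib_left)
    finally show ?thesis using sumLf by simp
  qed
  have nMn: "n \<bullet> Mt n = n \<bullet> B n - Lf n"
    unfolding Mt_eq using orth nn by (simp add: inner_diff_right inner_add_right)
  have sdt_val: "tr3 Mt - n \<bullet> Mt n = - an * (k1 + k2) - n \<bullet> B n"
    using trMt nMn trB trDn by simp
  have trK: "tr3 K = an * tr3 Mt + Lf aT"
  proof -
    have "tr3 K = (\<Sum>i\<in>UNIV. an * Mt (axis i 1) $ i + Lf (axis i 1) * aT $ i)"
      unfolding tr3_def K_eq by simp
    also have "\<dots> = an * tr3 Mt + (\<Sum>i\<in>UNIV. Lf (axis i 1) * aT $ i)"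
      unfolding tr3_def by (simp add: sum.distrib sum_distrib_left)
    finally show ?thesis using sumLf by simp
  qed
  have nKn: "n \<bullet> K n = an * (n \<bullet> Mt n)"
    unfolding K_eq using atn by (simp add: inner_add_right)
  have sdf_val: "tr3 K - n \<bullet> K n = Lf aT + an * (tr3 Mt - n \<bullet> Mt n)"
    using trK nKn by (simp add: algebra_simps)
  have LHS: "B a \<bullet> n = B aT \<bullet> n + an * (n \<bullet> B n)"
  proof -
    have "B a = B aT + an *\<^sub>R B n" by (subst a_dec) (simp add: linear_add[OF linB] linear_scale[OF linB])
    thus ?thesis by (simp add: inner_add_left inner_add_right inner_commute)
  qed
  have R1: "B a \<bullet> n = aT \<bullet> (G - (G \<bullet> n) *\<^sub>R n) - an * (tr3 Mt - n \<bullet> Mt n) - (k1 + k2) * an^2 - aT \<bullet> Dn aT"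
    unfolding X1 X2 sdt_val LHS by (simp add: algebra_simps power2_eq_square)
  have R2: "B a \<bullet> n = 2 * (aT \<bullet> (G - (G \<bullet> n) *\<^sub>R n)) - (tr3 K - n \<bullet> K n) - (k1 + k2) * an^2 - aT \<bullet> Dn aT"
    unfolding sdf_val X1 X2 sdt_val LHS by (simp add: algebra_simps power2_eq_square)
  show ?thesis
    unfolding sg sdt sdf tpp ncp so onp using R1 R2 unfolding B_def a_def by simp
qed


lemma same_accel:
  fixes u U :: "real^3 \<Rightarrow> real^3" and Du DU :: "real^3 \<Rightarrow> ((real^3) \<Rightarrow>\<^sub>L (real^3))"
  assumes oO: "open \<Omega>" and p: "p \<in> frontier \<Omega>" "p \<in> V"
    and C1: "C1_up_to_boundary \<Omega> u Du" and dv: "\<forall>x\<in>\<Omega>. divergence (Du x) = 0"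
    and C1U: "C1_up_to_boundary \<Omega> U DU" and dvU: "\<forall>x\<in>\<Omega>. divergence (DU x) = 0"
    and G: "union_of_boundary_components \<Omega> Gm" "p \<in> Gm" and eq: "\<forall>x\<in>Gm. u x = U x"
    and curv: "principal_curvatures \<Omega> p k1 k2"
  shows "blinfun_apply (Du p) (u p) \<bullet> outward_normal \<Omega> p = blinfun_apply (DU p) (U p) \<bullet> outward_normal \<Omega> p"
proof -
  obtain Dn where Dn: "(nu has_derivative Dn) (at p)" using nu_diff[OF p(2)] unfolding differentiable_def by blast
  define n where "n = nu p"
  have n1: "norm n = 1" using nu_norm[OF p(2)] n_def by simp
  have TSp: "tangent_space (frontier \<Omega>) p = {v. n \<bullet> v = 0}" using TSn[OF p] n_def by simp
  have compG: "connected_component_set (frontier \<Omega>) p \<subseteq> Gm" using G unfolding union_of_boundary_components_def by blast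
  have curves: "\<exists>\<gamma>. surface_curve (frontier \<Omega>) p \<gamma> v \<and> (\<forall>t. \<gamma> t \<in> Gm)" if "n \<bullet> v = 0" for v
  proof -
    have "N p \<bullet> v = 0" using that N_nz[OF p(2)] unfolding n_def nu_def by simp
    from CURVE[OF p this] obtain \<gamma> where "surface_curve (frontier \<Omega>) p \<gamma> v"
      "range \<gamma> \<subseteq> connected_component_set (frontier \<Omega>) p" by blast
    thus ?thesis using compG by blast
  qed
  have upU: "u p = U p" using eq G(2) by blast
  note du = derivs[OF oO p C1 Dn] and dU = derivs[OF oO p C1U Dn]
  have sgeq: "surface_grad (frontier \<Omega>) (normal_comp \<Omega> u) p = surface_grad (frontier \<Omega>) (normal_comp \<Omega> U) p"
  proof (rule SGEQ[OF TSp n1 du(1) dU(1)])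
    fix v assume "n \<bullet> v = 0"
    then obtain \<gamma> where "surface_curve (frontier \<Omega>) p \<gamma> v" "\<forall>t. \<gamma> t \<in> Gm" using curves by blast
    thus "\<exists>\<gamma>. surface_curve (frontier \<Omega>) p \<gamma> v \<and> (\<forall>t. normal_comp \<Omega> u (\<gamma> t) = normal_comp \<Omega> U (\<gamma> t))"
      using eq unfolding normal_comp_def by auto
  qed
  have sdeq: "surface_div (frontier \<Omega>) (tangential_part \<Omega> u) p = surface_div (frontier \<Omega>) (tangential_part \<Omega> U) p"
    unfolding surface_div_def
  proof (rule sum.cong[OF refl])
    fix i
    have "surface_grad (frontier \<Omega>) (\<lambda>x. tangential_part \<Omega> u x $ i) p = surface_grad (frontier \<Omega>) (\<lambda>x. tangential_part \<Omega> U x $ i) p"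
    proof (rule SGEQ[OF TSp n1 bounded_linear.has_derivative[OF bounded_linear_vec_nth du(2)]
                              bounded_linear.has_derivative[OF bounded_linear_vec_nth dU(2)]])
      fix v assume "n \<bullet> v = 0"
      then obtain \<gamma> where "surface_curve (frontier \<Omega>) p \<gamma> v" "\<forall>t. \<gamma> t \<in> Gm" using curves by blast
      thus "\<exists>\<gamma>. surface_curve (frontier \<Omega>) p \<gamma> v \<and> (\<forall>t. tangential_part \<Omega> u (\<gamma> t) $ i = tangential_part \<Omega> U (\<gamma> t) $ i)"
        using eq unfolding tangential_part_def normal_comp_def by auto
    qed
    thus "surface_grad (frontier \<Omega>) (\<lambda>x. tangential_part \<Omega> u x $ i) p $ i = surface_grad (frontier \<Omega>) (\<lambda>x. tangential_part \<Omega> U x $ i) p $ i"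
      by simp
  qed
  have nc: "normal_comp \<Omega> u p = normal_comp \<Omega> U p" "tangential_part \<Omega> u p = tangential_part \<Omega> U p"
    unfolding tangential_part_def normal_comp_def upU by simp_all
  show ?thesis
    using point_formula[OF oO p C1 dv curv, THEN conjunct1] point_formula[OF oO p C1U dvU curv, THEN conjunct1]
    unfolding sgeq sdeq nc by simp
qed

end


lemma get_chart:
  assumes dom: "bounded_C2_domain \<Omega>" and p: "p \<in> frontier \<Omega>"
  shows "\<exists>V \<phi> \<phi>'. chart \<Omega> V \<phi> \<phi>' \<and> p \<in> V"
proof -
  obtain V and \<phi> :: "real^3 \<Rightarrow> real" and \<phi>' where c: "open V" "p \<in> V"
    "\<forall>x\<in>V. (\<phi> has_derivative blinfun_apply (\<phi>' x)) (at x)" "C1_on V \<phi>'"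
    "\<forall>x\<in>V. \<phi>' x \<noteq> 0" "\<Omega> \<inter> V = {x\<in>V. \<phi> x < 0}" "frontier \<Omega> \<inter> V = {x\<in>V. \<phi> x = 0}"
  proof -
    from dom have "C2_boundary \<Omega>" unfolding bounded_C2_domain_def by blast
    from this[unfolded C2_boundary_def, rule_format, OF p] show ?thesis using that by blast
  qed
  obtain f' where f': "\<forall>x\<in>V. (\<phi>' has_derivative blinfun_apply (f' x)) (at x)"
    using c(4) unfolding C1_on_def by blast
  have "chart \<Omega> V \<phi> \<phi>'"
  proof
    show "open V" by (rule c(1))
    show "\<And>x. x \<in> V \<Longrightarrow> (\<phi> has_derivative blinfun_apply (\<phi>' x)) (at x)" using c(3) by blast
    show "continuous_on V \<phi>'"
      using f' by (meson continuous_at_imp_continuous_on has_derivative_continuous)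
    show "\<And>x. x \<in> V \<Longrightarrow> \<phi>' differentiable (at x)" using f' unfolding differentiable_def by blast
    show "\<And>x. x \<in> V \<Longrightarrow> \<phi>' x \<noteq> 0" using c(5) by blast
    show "\<Omega> \<inter> V = {x\<in>V. \<phi> x < 0}" by (rule c(6))
    show "frontier \<Omega> \<inter> V = {x\<in>V. \<phi> x = 0}" by (rule c(7))
  qed
  thus ?thesis using c(2) by blast
qed

theorem proposition9p2:
  fixes \<Omega> :: "(real^3) set" and u :: "real^3 \<Rightarrow> real^3"
    and Du :: "real^3 \<Rightarrow> ((real^3) \<Rightarrow>\<^sub>L (real^3))" and k1 k2 :: "real^3 \<Rightarrow> real"
  assumes dom: "bounded_C2_domain \<Omega>"
    and u_C1: "C1_up_to_boundary \<Omega> u Du"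
    and u_div: "\<forall>x\<in>\<Omega>. divergence (Du x) = 0"
    and curv: "\<forall>p\<in>frontier \<Omega>. principal_curvatures \<Omega> p (k1 p) (k2 p)"
  shows "(\<forall>p\<in>frontier \<Omega>.
            blinfun_apply (Du p) (u p) \<bullet> outward_normal \<Omega> p
              = tangential_part \<Omega> u p \<bullet> surface_grad (frontier \<Omega>) (normal_comp \<Omega> u) p
                - normal_comp \<Omega> u p * surface_div (frontier \<Omega>) (tangential_part \<Omega> u) p
                - (k1 p + k2 p) * (normal_comp \<Omega> u p)^2
                - tangential_part \<Omega> u p \<bullet> shape_operator \<Omega> p (tangential_part \<Omega> u p)
          \<and> blinfun_apply (Du p) (u p) \<bullet> outward_normal \<Omega> p
              = 2 * (tangential_part \<Omega> u p \<bullet> surface_grad (frontier \<Omega>) (normal_comp \<Omega> u) p)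
                - surface_div (frontier \<Omega>) (\<lambda>x. normal_comp \<Omega> u x *\<^sub>R tangential_part \<Omega> u x) p
                - (k1 p + k2 p) * (normal_comp \<Omega> u p)^2
                - tangential_part \<Omega> u p \<bullet> shape_operator \<Omega> p (tangential_part \<Omega> u p))
      \<and> (\<forall>U DU G. C1_up_to_boundary \<Omega> U DU \<and> (\<forall>x\<in>\<Omega>. divergence (DU x) = 0) \<and>
            union_of_boundary_components \<Omega> G \<and> (\<forall>x\<in>G. u x = U x) \<longrightarrow>
            (\<forall>p\<in>G. blinfun_apply (Du p) (u p) \<bullet> outward_normal \<Omega> p
                    = blinfun_apply (DU p) (U p) \<bullet> outward_normal \<Omega> p))"
proof (intro conjI ballI allI impI)
  have oO: "open \<Omega>" using dom unfolding bounded_C2_domain_def by blast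
  {
    fix p assume p: "p \<in> frontier \<Omega>"
    obtain V \<phi> \<phi>' where ch: "chart \<Omega> V \<phi> \<phi>'" "p \<in> V" using get_chart[OF dom p] by blast
    note pf = chart.point_formula[OF ch(1) oO p ch(2) u_C1 u_div curv[rule_format, OF p]]
    show "blinfun_apply (Du p) (u p) \<bullet> outward_normal \<Omega> p
              = tangential_part \<Omega> u p \<bullet> surface_grad (frontier \<Omega>) (normal_comp \<Omega> u) p
                - normal_comp \<Omega> u p * surface_div (frontier \<Omega>) (tangential_part \<Omega> u) p
                - (k1 p + k2 p) * (normal_comp \<Omega> u p)^2
                - tangential_part \<Omega> u p \<bullet> shape_operator \<Omega> p (tangential_part \<Omega> u p)"
      using pf by blast
    show "blinfun_apply (Du p) (u p) \<bullet> outward_normal \<Omega> p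
              = 2 * (tangential_part \<Omega> u p \<bullet> surface_grad (frontier \<Omega>) (normal_comp \<Omega> u) p)
                - surface_div (frontier \<Omega>) (\<lambda>x. normal_comp \<Omega> u x *\<^sub>R tangential_part \<Omega> u x) p
                - (k1 p + k2 p) * (normal_comp \<Omega> u p)^2
                - tangential_part \<Omega> u p \<bullet> shape_operator \<Omega> p (tangential_part \<Omega> u p)"
      using pf by blast
  }
  fix U DU G p
  assume H: "C1_up_to_boundary \<Omega> U DU \<and> (\<forall>x\<in>\<Omega>. divergence (DU x) = 0) \<and>
            union_of_boundary_components \<Omega> G \<and> (\<forall>x\<in>G. u x = U x)" and pG: "p \<in> G"
  have p: "p \<in> frontier \<Omega>" using H pG unfolding union_of_boundary_components_def by blast
  obtain V \<phi> \<phi>' where ch: "chart \<Omega> V \<phi> \<phi>'" "p \<in> V" using get_chart[OF dom p] by blast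
  show "blinfun_apply (Du p) (u p) \<bullet> outward_normal \<Omega> p = blinfun_apply (DU p) (U p) \<bullet> outward_normal \<Omega> p"
  proof (rule chart.same_accel[OF ch(1) oO p ch(2) u_C1 u_div])
    show "C1_up_to_boundary \<Omega> U DU" "\<forall>x\<in>\<Omega>. divergence (DU x) = 0"
      "union_of_boundary_components \<Omega> G" "\<forall>x\<in>G. u x = U x" using H by blast+
    show "p \<in> G" by (rule pG)
    show "principal_curvatures \<Omega> p (k1 p) (k2 p)" using curv p by blast
  qed
qed


end
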